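(* In the setting of the FedSLoP algorithm (see context), under Assumptions A1 and A2, for every round $t$ the aggregated update $\bar\Delta_t:=\frac1N\sum_{i=1}^N(\theta_{i,\tau}-\theta^t)$ satisfies $$\mathbb{E}_t\big[\|\bar\Delta_t\|^2\big]\le 2\eta^2S_\tau\Big(\underline{\delta}S_\tau\|\nabla f(\theta^t)\|^2+S_\tau\frac{\sigma_L^2}{N}+\frac{L^2}{1-\mu}D_t\Big).$$
   Context: Setting. Let $d,N,\tau$ be positive integers, $r$ an integer with $1\le r\le d$, $\underline{\delta}:=r/d\in(0,1]$, $\mu\in[0,1)$, $\eta>0$, $L>0$. Let $F_1,\dots,F_N:\mathbb{R}^d\to\mathbb{R}$ be differentiable and $f(\theta):=\frac1N\sum_{i=1}^N F_i(\theta)$. Assumption A1: $f$ is bounded below by $f_*>-\infty$, and $f$ and every $F_i$ are $L$-smooth (gradients $L$-Lipschitz). Assumption A2: each stochastic gradient $g_{i,s}=\nabla F_i(\theta_{i,s};\xi_{i,s})$ computed by the algorithm satisfies, conditionally on all randomness generated before it (including $\Pi_t$ and $\theta_{i,s}$), $\mathbb{E}[g_{i,s}]=\nabla F_i(\theta_{i,s})$ and $\mathbb{E}\|g_{i,s}-\nabla F_i(\theta_{i,s})\|^2\le\sigma_L^2$, the minibatch samples of different clients are conditionally independent; and $\|\nabla F_i(\theta)-\nabla f(\theta)\|^2\le\sigma_G^2$ for all $i$ and all $\theta\in\mathbb{R}^d$. Algorithm (FedSLoP, full participation). Start from $\theta^0\in\mathbb{R}^d$. In each round $t=0,1,\dots$: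 sample $P_t$ from the Haar (uniform, $O(d)$-invariant) distribution on $\mathrm{St}(d,r)=\{P\in\mathbb{R}^{d\times r}:P^\top P=I_r\}$, independently of all past randomness and of data sampling, and set $\Pi_t=P_tP_t^\top$. Each client $i=1,\dots,N$ sets $\theta_{i,0}=\theta^t$, $v_{i,0}=0$, and for $s=0,\dots,\tau-1$: $v_{i,s+1}=\mu v_{i,s}+\Pi_t g_{i,s}$, $\theta_{i,s+1}=\theta_{i,s}-\eta v_{i,s+1}$. The server sets $\theta^{t+1}=\theta^t+\frac1N\sum_{i=1}^N(\theta_{i,\tau}-\theta^t)$. Notation. $\mathbb{E}_t[\cdot]$ is the conditional expectation given $\theta^t$ and all randomness up to the start of round $t$ (so it averages over $\Pi_t$ and the round-$t$ minibatches). The drift is $D_t:=\frac1N\sum_{i=1}^N\sum_{s=0}^{\tau-1}\mathbb{E}_t\big[\|\theta_{i,s}-\theta^t\|^2\big]$. The momentum weights are $\alpha_{\tau,q}:=(1-\mu^{\tau-q})/(1-\mu)$ for $q=0,\dots,\tau-1$, and $S_\tau:=\sum_{q=0}^{\tau-1}\alpha_{\tau,q}$. *)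

theory Defs
  imports "HOL-Analysis.Analysis" "HOL-Probability.Probability"
begin

definition mom_alpha :: "real \<Rightarrow> nat \<Rightarrow> nat \<Rightarrow> real" where
  "mom_alpha \<mu> \<tau> q = (1 - \<mu> ^ (\<tau> - q)) / (1 - \<mu>)"

definition mom_S :: "real \<Rightarrow> nat \<Rightarrow> real" where
  "mom_S \<mu> \<tau> = (\<Sum>q<\<tau>. mom_alpha \<mu> \<tau> q)"

text \<open>Haar (uniform, O(d)-invariant) distribution on the Stiefel manifold St(d,r):
  P takes values in St(d,r) and its law is invariant under left multiplication
  by every orthogonal d x d matrix.  (This characterises the Haar law uniquely.)\<close>
definition haar_stiefel :: "'a measure \<Rightarrow> ('a \<Rightarrow> real^'r^'d) \<Rightarrow> bool" where
  "haar_stiefel M P \<longleftrightarrow>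
     P \<in> borel_measurable M \<and>
     (\<forall>\<omega>\<in>space M. transpose (P \<omega>) ** P \<omega> = mat 1) \<and>
     (\<forall>Q::real^'d^'d. orthogonal_matrix Q \<longrightarrow>
        distr M borel (\<lambda>\<omega>. Q ** P \<omega>) = distr M borel P)"

fun local_iter :: "real \<Rightarrow> real \<Rightarrow> real^'d \<Rightarrow> real^'d^'d \<Rightarrow> (nat \<Rightarrow> real^'d) \<Rightarrow> nat
                    \<Rightarrow> (real^'d) \<times> (real^'d)" where
  "local_iter \<eta> \<mu> th0 Proj gs 0 = (th0, 0)"
| "local_iter \<eta> \<mu> th0 Proj gs (Suc s) =
     (let (th, v) = local_iter \<eta> \<mu> th0 Proj gs s;
          v' = \<mu> *\<^sub>R v + Proj *v gs s
      in (th - \<eta> *\<^sub>R v', v'))"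

definition client_theta ::
  "real \<Rightarrow> real \<Rightarrow> real^'d \<Rightarrow> ('a \<Rightarrow> real^'r^'d) \<Rightarrow> (nat \<Rightarrow> nat \<Rightarrow> 'a \<Rightarrow> real^'d)
     \<Rightarrow> nat \<Rightarrow> nat \<Rightarrow> 'a \<Rightarrow> real^'d" where
  "client_theta \<eta> \<mu> th0 P g i s \<omega> =
     fst (local_iter \<eta> \<mu> th0 (P \<omega> ** transpose (P \<omega>)) (\<lambda>q. g i q \<omega>) s)"

definition past_sa ::
  "'a measure \<Rightarrow> nat \<Rightarrow> ('a \<Rightarrow> real^'r^'d) \<Rightarrow> (nat \<Rightarrow> nat \<Rightarrow> 'a \<Rightarrow> real^'d) \<Rightarrow> nat \<Rightarrow> 'a measure" where
  "past_sa M N P g s = sigma (space M)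
     ({P -` A \<inter> space M | A. A \<in> sets borel} \<union>
      {g j q -` A \<inter> space M | j q A. j < N \<and> q < s \<and> A \<in> sets borel})"

end

theory Submission
  imports Defs
begin

lemma mom_alpha_Suc_lt:
  assumes "\<mu> \<noteq> 1" "q < s"
  shows "mom_alpha \<mu> (Suc s) q = mom_alpha \<mu> s q + \<mu> ^ (s - q)"
proof -
  have "Suc s - q = Suc (s - q)" using assms by simp
  then have "\<mu> ^ (Suc s - q) = \<mu> * \<mu> ^ (s - q)" by simp
  moreover have "1 - \<mu> \<noteq> 0" using assms by simp
  ultimately show ?thesis unfolding mom_alpha_def by (simp add: field_simps)
qed

lemma mom_alpha_Suc_eq:
  assumes "\<mu> \<noteq> 1"
  shows "mom_alpha \<mu> (Suc s) s = 1"
  using assms unfolding mom_alpha_def by simp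

lemma local_iter_closed:
  assumes "\<mu> \<noteq> 1"
  shows "local_iter \<eta> \<mu> th0 Pr gs s =
    (th0 - \<eta> *\<^sub>R (\<Sum>q<s. mom_alpha \<mu> s q *\<^sub>R (Pr *v gs q)),
     (\<Sum>q<s. \<mu> ^ (s - 1 - q) *\<^sub>R (Pr *v gs q)))"
proof (induction s)
  case 0
  then show ?case by simp
next
  case (Suc s)
  have v: "\<mu> *\<^sub>R (\<Sum>q<s. \<mu> ^ (s - 1 - q) *\<^sub>R (Pr *v gs q)) + Pr *v gs s
      = (\<Sum>q<Suc s. \<mu> ^ (Suc s - 1 - q) *\<^sub>R (Pr *v gs q))"
  proof -
    have "\<mu> *\<^sub>R (\<Sum>q<s. \<mu> ^ (s - 1 - q) *\<^sub>R (Pr *v gs q)) = (\<Sum>q<s. \<mu> ^ (Suc s - 1 - q) *\<^sub>R (Pr *v gs q))"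
      unfolding scaleR_sum_right
    proof (rule sum.cong)
      fix q assume "q \<in> {..<s}"
      then have "Suc s - 1 - q = Suc (s - 1 - q)" by auto
      then show "\<mu> *\<^sub>R \<mu> ^ (s - 1 - q) *\<^sub>R (Pr *v gs q) = \<mu> ^ (Suc s - 1 - q) *\<^sub>R (Pr *v gs q)"
        by simp
    qed simp
    then show ?thesis by simp
  qed
  have t: "(\<Sum>q<s. mom_alpha \<mu> s q *\<^sub>R (Pr *v gs q)) + (\<Sum>q<Suc s. \<mu> ^ (Suc s - 1 - q) *\<^sub>R (Pr *v gs q))
     = (\<Sum>q<Suc s. mom_alpha \<mu> (Suc s) q *\<^sub>R (Pr *v gs q))"
  proof -
    have "(\<Sum>q<Suc s. mom_alpha \<mu> (Suc s) q *\<^sub>R (Pr *v gs q))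
      = (\<Sum>q<s. mom_alpha \<mu> (Suc s) q *\<^sub>R (Pr *v gs q)) + Pr *v gs s"
      using mom_alpha_Suc_eq[OF assms] by simp
    also have "(\<Sum>q<s. mom_alpha \<mu> (Suc s) q *\<^sub>R (Pr *v gs q))
       = (\<Sum>q<s. mom_alpha \<mu> s q *\<^sub>R (Pr *v gs q)) + (\<Sum>q<s. \<mu> ^ (s - q) *\<^sub>R (Pr *v gs q))"
      unfolding sum.distrib[symmetric]
      by (rule sum.cong) (auto simp: mom_alpha_Suc_lt[OF assms] scaleR_add_left)
    also have "(\<Sum>q<Suc s. \<mu> ^ (Suc s - 1 - q) *\<^sub>R (Pr *v gs q)) = (\<Sum>q<s. \<mu> ^ (s - q) *\<^sub>R (Pr *v gs q)) + Pr *v gs s"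
      by simp
    ultimately show ?thesis by (simp add: algebra_simps)
  qed
  show ?case
    using Suc v t by (simp add: Let_def algebra_simps flip: scaleR_add_right)
qed

lemma norm_sum_weighted_sq:
  fixes x :: "'b \<Rightarrow> 'c::real_normed_vector"
  assumes "finite A" "\<And>q. q \<in> A \<Longrightarrow> 0 \<le> a q"
  shows "(norm (\<Sum>q\<in>A. a q *\<^sub>R x q))\<^sup>2 \<le> (\<Sum>q\<in>A. a q) * (\<Sum>q\<in>A. a q * (norm (x q))\<^sup>2)"
proof -
  have "norm (\<Sum>q\<in>A. a q *\<^sub>R x q) \<le> (\<Sum>q\<in>A. a q * norm (x q))"
    using norm_sum[of "\<lambda>q. a q *\<^sub>R x q" A] assms by (simp add: abs_of_nonneg)
  then have "(norm (\<Sum>q\<in>A. a q *\<^sub>R x q))\<^sup>2 \<le> (\<Sum>q\<in>A. a q * norm (x q))\<^sup>2"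
    by (simp add: power_mono)
  also have "(\<Sum>q\<in>A. a q * norm (x q)) = (\<Sum>q\<in>A. sqrt (a q) * (sqrt (a q) * norm (x q)))"
    by (rule sum.cong) (auto simp: assms real_sqrt_mult_self simp flip: mult.assoc)
  also have "(\<dots>)\<^sup>2 \<le> (\<Sum>q\<in>A. (sqrt (a q))\<^sup>2) * (\<Sum>q\<in>A. (sqrt (a q) * norm (x q))\<^sup>2)"
    by (rule Cauchy_Schwarz_ineq_sum)
  also have "\<dots> = (\<Sum>q\<in>A. a q) * (\<Sum>q\<in>A. a q * (norm (x q))\<^sup>2)"
    using assms by (simp add: power_mult_distrib)
  finally show ?thesis .
qed

lemma norm_avg_sq:
  fixes x :: "nat \<Rightarrow> 'c::real_normed_vector"
  assumes "N > 0"
  shows "(norm ((1 / real N) *\<^sub>R (\<Sum>i<N. x i)))\<^sup>2 \<le> (1 / real N) * (\<Sum>i<N. (norm (x i))\<^sup>2)"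
proof -
  have "(1 / real N) *\<^sub>R (\<Sum>i<N. x i) = (\<Sum>i<N. (1 / real N) *\<^sub>R x i)" by (simp add: scaleR_sum_right)
  then have "(norm ((1 / real N) *\<^sub>R (\<Sum>i<N. x i)))\<^sup>2 \<le> (\<Sum>i<N. 1 / real N) * (\<Sum>i<N. (1/real N) * (norm (x i))\<^sup>2)"
    using norm_sum_weighted_sq[of "{..<N}" "\<lambda>_. 1 / real N" x] by simp
  also have "\<dots> = (1 / real N) * (\<Sum>i<N. (norm (x i))\<^sup>2)"
    using assms by (simp add: sum_divide_distrib)
  finally show ?thesis .
qed

declare transpose_matrix_vector [simp del]

lemma inner_mv_transpose:
  fixes A :: "real^'n^'m"
  shows "(A *v x) \<bullet> y = x \<bullet> (transpose A *v y)"
  by (metis dot_lmul_matrix inner_commute transpose_matrix_vector transpose_transpose)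

lemma stiefel_norm:
  fixes P :: "real^'r^'d"
  assumes "transpose P ** P = mat 1"
  shows "norm (P *v y) = norm y"
proof -
  have "(P *v y) \<bullet> (P *v y) = y \<bullet> y"
    by (simp add: inner_mv_transpose matrix_vector_mul_assoc assms)
  then show ?thesis by (simp add: norm_eq_sqrt_inner)
qed

lemma stiefel_proj_norm:
  fixes P :: "real^'r^'d"
  assumes "transpose P ** P = mat 1"
  shows "norm ((P ** transpose P) *v z) = norm (transpose P *v z)"
  by (simp add: stiefel_norm[OF assms] flip: matrix_vector_mul_assoc)

lemma stiefel_transpose_le:
  fixes P :: "real^'r^'d"
  assumes "transpose P ** P = mat 1"
  shows "norm (transpose P *v z) \<le> norm z"
proof -
  have "(norm (transpose P *v z))\<^sup>2 = (transpose P *v z) \<bullet> (transpose P *v z)"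
    by (simp add: power2_norm_eq_inner)
  also have "\<dots> = z \<bullet> (P *v (transpose P *v z))"
    by (metis inner_mv_transpose inner_commute transpose_transpose)
  also have "\<dots> \<le> norm z * norm (P *v (transpose P *v z))"
    by (rule norm_cauchy_schwarz)
  also have "\<dots> = norm z * norm (transpose P *v z)"
    by (simp add: stiefel_norm[OF assms])
  finally have "(norm (transpose P *v z))\<^sup>2 \<le> norm z * norm (transpose P *v z)" .
  then show ?thesis
    by (metis mult_right_le_imp_le norm_ge_zero power2_eq_square mult_zero_right order_le_less)
qed

lemma stiefel_proj_le:
  fixes P :: "real^'r^'d"
  assumes "transpose P ** P = mat 1"
  shows "norm ((P ** transpose P) *v z) \<le> norm z"
  using stiefel_proj_norm[OF assms] stiefel_transpose_le[OF assms] by simp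

lemma stiefel_proj_inner:
  fixes P :: "real^'r^'d"
  assumes "transpose P ** P = mat 1"
  shows "((P ** transpose P) *v a) \<bullet> ((P ** transpose P) *v b) = ((P ** transpose P) *v a) \<bullet> b"
proof -
  have "((P ** transpose P) *v a) \<bullet> ((P ** transpose P) *v b)
      = (transpose P *v a) \<bullet> (transpose P *v (P *v (transpose P *v b)))"
    by (simp add: inner_mv_transpose flip: matrix_vector_mul_assoc)
  also have "\<dots> = (transpose P *v a) \<bullet> (transpose P *v b)"
    by (metis matrix_vector_mul_assoc assms matrix_vector_mul_lid)
  also have "\<dots> = ((P ** transpose P) *v a) \<bullet> b"
    by (simp add: inner_mv_transpose flip: matrix_vector_mul_assoc)
  finally show ?thesis .
qed

lemma norm_vec_sq: "(norm (v::real^'n))\<^sup>2 = (\<Sum>j\<in>UNIV. (v $ j)\<^sup>2)"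
  unfolding power2_norm_eq_inner inner_vec_def by (simp add: power2_eq_square)

lemma stiefel_frob:
  fixes P :: "real^'r^'d"
  assumes "transpose P ** P = mat 1"
  shows "(\<Sum>k\<in>UNIV. (norm (transpose P *v axis k 1))\<^sup>2) = real CARD('r)"
proof -
  have "(\<Sum>k\<in>UNIV. (norm (transpose P *v axis k 1))\<^sup>2) = (\<Sum>k\<in>UNIV. \<Sum>j\<in>UNIV. (P $ k $ j)\<^sup>2)"
  proof (rule sum.cong)
    fix k
    have "transpose P *v axis k 1 = (\<chi> j. P $ k $ j)"
      by (simp add: vec_eq_iff matrix_vector_mult_def transpose_def axis_def if_distrib cong: if_cong)
    then show "(norm (transpose P *v axis k 1))\<^sup>2 = (\<Sum>j\<in>UNIV. (P $ k $ j)\<^sup>2)"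
      by (simp only: norm_vec_sq vec_lambda_beta)
  qed simp
  also have "\<dots> = (\<Sum>j\<in>UNIV. (transpose P ** P) $ j $ j)"
    by (subst sum.swap) (simp add: matrix_matrix_mult_def transpose_def power2_eq_square)
  also have "\<dots> = real CARD('r)"
    by (simp add: assms mat_def)
  finally show ?thesis .
qed

lemma measurable_vec_nth [measurable (raw)]:
  fixes f :: "'a \<Rightarrow> 'b::real_normed_vector^'n"
  assumes "f \<in> borel_measurable M"
  shows "(\<lambda>x. f x $ i) \<in> borel_measurable M"
  by (rule borel_measurable_continuous_on[OF _ assms]) (rule linear_continuous_on[OF bounded_linear_vec_nth])

lemma measurable_vecI:
  fixes f :: "'a \<Rightarrow> 'b::euclidean_space^'n"
  assumes "\<And>i. (\<lambda>x. f x $ i) \<in> borel_measurable M"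
  shows "f \<in> borel_measurable M"
proof (subst borel_measurable_euclidean_space, intro ballI)
  fix b :: "'b^'n" assume "b \<in> Basis"
  then obtain i u where "b = axis i u" "u \<in> Basis" by (auto simp: Basis_vec_def)
  then show "(\<lambda>x. f x \<bullet> b) \<in> borel_measurable M"
    using assms[of i] by (simp add: inner_axis)
qed

lemma measurable_mv [measurable (raw)]:
  fixes A :: "'a \<Rightarrow> real^'n^'m"
  assumes [measurable]: "A \<in> borel_measurable M" "x \<in> borel_measurable M"
  shows "(\<lambda>w. A w *v x w) \<in> borel_measurable M"
  by (rule measurable_vecI, unfold matrix_vector_mult_def vec_lambda_beta) measurable

lemma measurable_mm [measurable (raw)]:
  fixes A :: "'a \<Rightarrow> real^'n^'m" and B :: "'a \<Rightarrow> real^'k^'n"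
  assumes [measurable]: "A \<in> borel_measurable M" "B \<in> borel_measurable M"
  shows "(\<lambda>w. A w ** B w) \<in> borel_measurable M"
  by (intro measurable_vecI, unfold matrix_matrix_mult_def vec_lambda_beta) measurable

lemma measurable_transpose [measurable (raw)]:
  fixes A :: "'a \<Rightarrow> real^'n^'m"
  assumes [measurable]: "A \<in> borel_measurable M"
  shows "(\<lambda>w. transpose (A w)) \<in> borel_measurable M"
  by (intro measurable_vecI, unfold transpose_def vec_lambda_beta) measurable

lemma mv_scaleR: "(A::real^'n^'m) *v (c *\<^sub>R u) = c *\<^sub>R (A *v u)"
  by (simp add: vec_eq_iff matrix_vector_mult_def sum_distrib_left algebra_simps)

lemma haar_expect:
  fixes P :: "'a \<Rightarrow> real^'r^'d"
  assumes prob: "prob_space M" and haar: "haar_stiefel M P"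
  shows "integrable M (\<lambda>\<omega>. (norm (transpose (P \<omega>) *v x))\<^sup>2)"
    "(\<integral>\<omega>. (norm (transpose (P \<omega>) *v x))\<^sup>2 \<partial>M) = real CARD('r) / real CARD('d) * (norm x)\<^sup>2"
proof -
  interpret prob_space M by (rule prob)
  have Pm[measurable]: "P \<in> borel_measurable M" and PP: "\<And>\<omega>. \<omega> \<in> space M \<Longrightarrow> transpose (P \<omega>) ** P \<omega> = mat 1"
    and inv: "\<And>Q::real^'d^'d. orthogonal_matrix Q \<Longrightarrow> distr M borel (\<lambda>\<omega>. Q ** P \<omega>) = distr M borel P"
    using haar unfolding haar_stiefel_def by auto
  define \<phi> where "\<phi> u = (\<integral>\<omega>. (norm (transpose (P \<omega>) *v u))\<^sup>2 \<partial>M)" for u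
  have int: "integrable M (\<lambda>\<omega>. (norm (transpose (P \<omega>) *v u))\<^sup>2)" for u
  proof (rule integrable_const_bound[where B="(norm u)\<^sup>2"])
    show "AE \<omega> in M. norm ((norm (transpose (P \<omega>) *v u))\<^sup>2) \<le> (norm u)\<^sup>2"
      using stiefel_transpose_le[OF PP] by (auto intro!: AE_I2 power_mono)
  qed measurable
  then show "integrable M (\<lambda>\<omega>. (norm (transpose (P \<omega>) *v x))\<^sup>2)" .
  have hm[measurable]: "(\<lambda>A::real^'r^'d. (norm (transpose A *v u))\<^sup>2) \<in> borel_measurable borel" for u
  proof -
    have "(\<lambda>A::real^'r^'d. transpose A *v u) \<in> borel_measurable borel"
      by (rule measurable_mv[OF measurable_transpose[OF measurable_ident_sets[OF refl]] borel_measurable_const])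
    moreover have c: "continuous_on UNIV (\<lambda>v::real^'r. (norm v)\<^sup>2)" by (intro continuous_intros)
    ultimately show ?thesis using borel_measurable_continuous_on[OF c] by blast
  qed
  have rotinv: "\<phi> (transpose Q *v u) = \<phi> u" if Q: "orthogonal_matrix Q" for Q :: "real^'d^'d" and u
  proof -
    have "\<phi> u = integral\<^sup>L (distr M borel P) (\<lambda>A. (norm (transpose A *v u))\<^sup>2)"
      unfolding \<phi>_def by (subst integral_distr[OF _ hm]) auto
    also have "\<dots> = integral\<^sup>L (distr M borel (\<lambda>\<omega>. Q ** P \<omega>)) (\<lambda>A. (norm (transpose A *v u))\<^sup>2)"
      using inv[OF Q] by simp
    also have "\<dots> = (\<integral>\<omega>. (norm (transpose (Q ** P \<omega>) *v u))\<^sup>2 \<partial>M)"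
      by (subst integral_distr[OF _ hm]) auto
    also have "\<dots> = \<phi> (transpose Q *v u)"
      unfolding \<phi>_def by (simp only: matrix_transpose_mul flip: matrix_vector_mul_assoc)
    finally show ?thesis by simp
  qed
  have hom: "\<phi> (c *\<^sub>R u) = c\<^sup>2 * \<phi> u" for c u
    unfolding \<phi>_def by (simp add: mv_scaleR power_mult_distrib)
  have eqn: "\<phi> x = \<phi> y" if nx: "norm x = norm y" for x y :: "real^'d"
  proof -
    obtain f where f: "orthogonal_transformation f" "f x = y"
      using orthogonal_transformation_exists[OF nx] by blast
    then have lin: "linear f" and om: "orthogonal_matrix (matrix f)"
      using orthogonal_transformation_matrix by auto
    have "orthogonal_matrix (transpose (matrix f))" using om by (simp add: orthogonal_matrix_transpose)
    from rotinv[OF this, of x] have "\<phi> (matrix f *v x) = \<phi> x" by simp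
    then show ?thesis using fun_cong[OF matrix_vector_mul(2)[OF lin], of x] f by simp
  qed
  obtain k0 :: 'd where True by simp
  have all: "\<phi> (axis k 1) = \<phi> (axis k0 1)" for k by (rule eqn) simp
  have "(\<Sum>k\<in>UNIV. \<phi> (axis k 1)) = (\<integral>\<omega>. (\<Sum>k\<in>UNIV. (norm (transpose (P \<omega>) *v axis k 1))\<^sup>2) \<partial>M)"
    unfolding \<phi>_def by (subst Bochner_Integration.integral_sum) (auto intro: int)
  also have "\<dots> = (\<integral>\<omega>. real CARD('r) \<partial>M)"
    by (rule Bochner_Integration.integral_cong) (auto simp: stiefel_frob[OF PP])
  also have "\<dots> = real CARD('r)" by (simp add: prob_space)
  moreover have "(\<Sum>k\<in>UNIV. \<phi> (axis k 1)) = (\<Sum>k\<in>(UNIV::'d set). \<phi> (axis k0 1))"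
    by (rule sum.cong) (auto intro: all)
  ultimately have "real CARD('d) * \<phi> (axis k0 1) = real CARD('r)"
    by simp
  then have e: "\<phi> (axis k0 1) = real CARD('r) / real CARD('d)"
    by (simp add: field_simps)
  have "\<phi> x = \<phi> (norm x *\<^sub>R axis k0 1)" by (rule eqn) simp
  also have "\<dots> = (norm x)\<^sup>2 * \<phi> (axis k0 1)" by (rule hom)
  finally show "(\<integral>\<omega>. (norm (transpose (P \<omega>) *v x))\<^sup>2 \<partial>M) = real CARD('r) / real CARD('d) * (norm x)\<^sup>2"
    using e unfolding \<phi>_def by simp
qed

lemma int_prod_sq:
  fixes a b :: "'a \<Rightarrow> real"
  assumes [measurable]: "a \<in> borel_measurable M" "b \<in> borel_measurable M"
    and ia: "integrable M (\<lambda>w. (a w)\<^sup>2)" and ib: "integrable M (\<lambda>w. (b w)\<^sup>2)"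
  shows "integrable M (\<lambda>w. a w * b w)"
proof (rule Bochner_Integration.integrable_bound[OF Bochner_Integration.integrable_add[OF ia ib]])
  show "AE w in M. norm (a w * b w) \<le> norm ((a w)\<^sup>2 + (b w)\<^sup>2)"
  proof (rule AE_I2)
    fix w
    have "2 * \<bar>a w\<bar> * \<bar>b w\<bar> \<le> (a w)\<^sup>2 + (b w)\<^sup>2"
      using sum_squares_bound[of "\<bar>a w\<bar>" "\<bar>b w\<bar>"] by (simp add: power2_abs)
    then have "\<bar>a w\<bar> * \<bar>b w\<bar> \<le> (a w)\<^sup>2 + (b w)\<^sup>2"
      using mult_nonneg_nonneg[OF abs_ge_zero abs_ge_zero, of "a w" "b w"] by linarith
    then show "norm (a w * b w) \<le> norm ((a w)\<^sup>2 + (b w)\<^sup>2)"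
      by (simp add: abs_mult)
  qed
qed measurable

lemma int_of_sq:
  fixes a :: "'a \<Rightarrow> real"
  assumes "prob_space M" and [measurable]: "a \<in> borel_measurable M"
    and ia: "integrable M (\<lambda>w. (a w)\<^sup>2)"
  shows "integrable M a"
proof -
  interpret prob_space M by fact
  have "integrable M (\<lambda>w. a w * 1)"
    by (rule int_prod_sq) (auto simp: ia)
  then show ?thesis by simp
qed

lemma int_vec_comp_sq:
  fixes X :: "'a \<Rightarrow> real^'n"
  assumes [measurable]: "X \<in> borel_measurable M" and iX: "integrable M (\<lambda>w. (norm (X w))\<^sup>2)"
  shows "integrable M (\<lambda>w. (X w $ k)\<^sup>2)"
proof (rule Bochner_Integration.integrable_bound[OF iX])
  show "AE w in M. norm ((X w $ k)\<^sup>2) \<le> norm ((norm (X w))\<^sup>2)"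
    by (intro AE_I2) (use power_mono[OF component_le_norm_cart abs_ge_zero, of "X _" k 2] in simp)
qed measurable

lemma tower_ae:
  fixes f g h :: "'a \<Rightarrow> real"
  assumes "sigma_finite_subalgebra M F"
    and [measurable]: "f \<in> borel_measurable F" "g \<in> borel_measurable M" "h \<in> borel_measurable M"
    and i: "integrable M (\<lambda>x. f x * g x)"
    and ae: "AE x in M. real_cond_exp M F g x = h x"
  shows "(\<integral>x. f x * g x \<partial>M) = (\<integral>x. f x * h x \<partial>M)"
proof -
  interpret sigma_finite_subalgebra M F by fact
  have [measurable]: "f \<in> borel_measurable M" using measurable_from_subalg[OF subalg assms(2)] .
  have "(\<integral>x. f x * g x \<partial>M) = (\<integral>x. f x * real_cond_exp M F g x \<partial>M)"
    using real_cond_exp_intg(2)[OF i] by simp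
  also have "\<dots> = (\<integral>x. f x * h x \<partial>M)"
    by (rule integral_cong_AE) (use ae in auto)
  finally show ?thesis .
qed

definition trunc :: "real \<Rightarrow> real \<Rightarrow> real" where
  "trunc n x = max (- n) (min n x)"

lemma trunc_abs: "0 \<le> n \<Longrightarrow> \<bar>trunc n x\<bar> \<le> n"
  unfolding trunc_def by auto

lemma trunc_abs2: "0 \<le> n \<Longrightarrow> \<bar>trunc n x\<bar> \<le> \<bar>x\<bar>"
  unfolding trunc_def by auto

lemma trunc_lim: "(\<lambda>m. trunc (real m) x) \<longlonglongrightarrow> x"
proof (rule tendsto_eventually)
  obtain m0 :: nat where "\<bar>x\<bar> \<le> real m0" using real_arch_simple by blast
  then show "eventually (\<lambda>m. trunc (real m) x = x) sequentially"
    unfolding eventually_sequentially trunc_def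
    by (intro exI[of _ m0]) (auto simp: max_def min_def)
qed

lemma trunc_cont: "continuous_on UNIV (trunc n)"
  unfolding trunc_def by (intro continuous_intros)

lemma trunc_meas [measurable]: "trunc n \<in> borel_measurable borel"
  by (rule borel_measurable_continuous_onI[OF trunc_cont])

lemma indep_cross_generic:
  fixes X Y GX GY :: "'a \<Rightarrow> real"
  assumes prob: "prob_space M" and sf: "sigma_finite_subalgebra M F"
    and [measurable]: "X \<in> borel_measurable M" "Y \<in> borel_measurable M"
      "GX \<in> borel_measurable F" "GY \<in> borel_measurable F"
    and iX: "integrable M (\<lambda>w. (X w)\<^sup>2)" and iY: "integrable M (\<lambda>w. (Y w)\<^sup>2)"
    and iGX: "integrable M (\<lambda>w. (GX w)\<^sup>2)" and iGY: "integrable M (\<lambda>w. (GY w)\<^sup>2)"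
    and cX: "AE w in M. real_cond_exp M F X w = GX w"
    and cY: "AE w in M. real_cond_exp M F Y w = GY w"
    and indep: "\<And>m n::nat. AE w in M. real_cond_exp M F (\<lambda>w. trunc (real m) (X w) * trunc (real n) (Y w)) w
        = real_cond_exp M F (\<lambda>w. trunc (real m) (X w)) w * real_cond_exp M F (\<lambda>w. trunc (real n) (Y w)) w"
  shows "(\<integral>w. (X w - GX w) * (Y w - GY w) \<partial>M) = 0"
proof -
  interpret prob_space M by (rule prob)
  interpret sigma_finite_subalgebra M F by (rule sf)
  have [measurable]: "GX \<in> borel_measurable M" "GY \<in> borel_measurable M"
    using measurable_from_subalg[OF subalg assms(5)] measurable_from_subalg[OF subalg assms(6)] by auto
  have intX: "integrable M X" by (rule int_of_sq[OF prob]) (auto simp: iX)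
  have intGX: "integrable M GX" by (rule int_of_sq[OF prob]) (auto simp: iGX)
  have intGY: "integrable M GY" by (rule int_of_sq[OF prob]) (auto simp: iGY)
  have iXY: "integrable M (\<lambda>w. X w * Y w)" by (rule int_prod_sq) (auto simp: iX iY)
  have iXGY: "integrable M (\<lambda>w. X w * GY w)" by (rule int_prod_sq) (auto simp: iX iGY)
  have iGXY: "integrable M (\<lambda>w. GX w * Y w)" by (rule int_prod_sq) (auto simp: iGX iY)
  have iGXGY: "integrable M (\<lambda>w. GX w * GY w)" by (rule int_prod_sq) (auto simp: iGX iGY)
  have iGYX: "integrable M (\<lambda>w. GY w * X w)" using iXGY by (simp add: mult.commute)
  define TX where "TX m w = trunc (real m) (X w)" for m w
  define TY where "TY n w = trunc (real n) (Y w)" for n w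
  define CX where "CX m = real_cond_exp M F (TX m)" for m
  define CY where "CY n = real_cond_exp M F (TY n)" for n
  have [measurable]: "TX m \<in> borel_measurable M" "TY n \<in> borel_measurable M" for m n
    unfolding TX_def TY_def by measurable
  have [measurable]: "CX m \<in> borel_measurable F" "CY n \<in> borel_measurable F" for m n
    unfolding CX_def CY_def by measurable
  have [measurable]: "CX m \<in> borel_measurable M" "CY n \<in> borel_measurable M" for m n
    unfolding CX_def CY_def by measurable
  have bTX: "\<bar>TX m w\<bar> \<le> real m" and bTY: "\<bar>TY n w\<bar> \<le> real n" for m n w
    unfolding TX_def TY_def by (auto intro: trunc_abs)
  have TXe: "TX m = (\<lambda>w. trunc (real m) (X w))" for m by (rule ext) (simp add: TX_def)
  have TYe: "TY n = (\<lambda>w. trunc (real n) (Y w))" for n by (rule ext) (simp add: TY_def)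
  have loTX: "- real m \<le> TX m w" "TX m w \<le> real m" for m w using bTX[of m w] by (auto simp: abs_le_iff)
  have loTY: "- real n \<le> TY n w" "TY n w \<le> real n" for n w using bTY[of n w] by (auto simp: abs_le_iff)
  have iTX: "integrable M (TX m)" for m
    by (rule integrable_const_bound[where B="real m"]) (auto simp: bTX)
  have iTY: "integrable M (TY n)" for n
    by (rule integrable_const_bound[where B="real n"]) (auto simp: bTY)
  have bCY: "AE w in M. \<bar>CY n w\<bar> \<le> real n" for n
  proof -
    have "AE w in M. CY n w \<le> real n" unfolding CY_def
      by (rule real_cond_exp_le_c[OF iTY]) (intro AE_I2 loTY)
    moreover have "AE w in M. CY n w \<ge> - real n" unfolding CY_def
      by (rule real_cond_exp_ge_c[OF iTY]) (intro AE_I2 loTY)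
    ultimately show ?thesis by auto
  qed
  have bCX: "AE w in M. \<bar>CX m w\<bar> \<le> real m" for m
  proof -
    have "AE w in M. CX m w \<le> real m" unfolding CX_def
      by (rule real_cond_exp_le_c[OF iTX]) (intro AE_I2 loTX)
    moreover have "AE w in M. CX m w \<ge> - real m" unfolding CX_def
      by (rule real_cond_exp_ge_c[OF iTX]) (intro AE_I2 loTX)
    ultimately show ?thesis by auto
  qed
  have b: "(\<integral>w. TX m w * TY n w \<partial>M) = (\<integral>w. TX m w * CY n w \<partial>M)" for m n
  proof -
    have iTT: "integrable M (\<lambda>w. TX m w * TY n w)"
      by (rule integrable_const_bound[where B="real m * real n"])
        (auto simp: abs_mult intro!: mult_mono bTX bTY)
    have "(\<integral>w. TX m w * TY n w \<partial>M) = (\<integral>w. real_cond_exp M F (\<lambda>w. TX m w * TY n w) w \<partial>M)"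
      using real_cond_exp_int(2)[OF iTT] by simp
    also have "\<dots> = (\<integral>w. CX m w * CY n w \<partial>M)"
      by (rule integral_cong_AE) (use indep[of m n] in \<open>auto simp: TXe TYe CX_def CY_def\<close>)
    also have "\<dots> = (\<integral>w. CY n w * TX m w \<partial>M)"
    proof -
      have i: "integrable M (\<lambda>w. CY n w * TX m w)"
        by (rule integrable_const_bound[where B="real n * real m"])
          (use bCY[of n] in \<open>auto simp: abs_mult intro!: mult_mono bTX\<close>)
      show ?thesis using real_cond_exp_intg(2)[OF i] by (simp add: CX_def mult.commute)
    qed
    finally show ?thesis by (simp add: mult.commute)
  qed
  have c: "(\<integral>w. X w * TY n w \<partial>M) = (\<integral>w. X w * CY n w \<partial>M)" for n
  proof -
    have dom1: "integrable M (\<lambda>w. real n * \<bar>X w\<bar>)" using intX by auto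
    have l1: "(\<lambda>m. \<integral>w. TX m w * TY n w \<partial>M) \<longlonglongrightarrow> (\<integral>w. X w * TY n w \<partial>M)"
    proof (rule integral_dominated_convergence[OF _ _ dom1])
      show "AE w in M. (\<lambda>m. TX m w * TY n w) \<longlonglongrightarrow> X w * TY n w"
        unfolding TX_def by (intro AE_I2 tendsto_mult trunc_lim tendsto_const)
      show "AE w in M. norm (TX m w * TY n w) \<le> real n * \<bar>X w\<bar>" for m
        by (intro AE_I2) (auto simp: abs_mult TX_def mult.commute intro!: mult_mono bTY trunc_abs2)
    qed measurable
    have l2: "(\<lambda>m. \<integral>w. TX m w * CY n w \<partial>M) \<longlonglongrightarrow> (\<integral>w. X w * CY n w \<partial>M)"
    proof (rule integral_dominated_convergence[OF _ _ dom1])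
      show "AE w in M. (\<lambda>m. TX m w * CY n w) \<longlonglongrightarrow> X w * CY n w"
        unfolding TX_def by (intro AE_I2 tendsto_mult trunc_lim tendsto_const)
      show "AE w in M. norm (TX m w * CY n w) \<le> real n * \<bar>X w\<bar>" for m
        using bCY[of n] by eventually_elim (auto simp: abs_mult TX_def mult.commute intro!: mult_mono trunc_abs2)
    qed measurable
    show ?thesis using LIMSEQ_unique[OF l1, of "\<integral>w. X w * CY n w \<partial>M"] l2 b by simp
  qed
  have d: "(\<integral>w. X w * TY n w \<partial>M) = (\<integral>w. GX w * TY n w \<partial>M)" for n
  proof -
    have i1: "integrable M (\<lambda>w. CY n w * X w)"
      by (rule Bochner_Integration.integrable_bound[where f="\<lambda>w. real n * \<bar>X w\<bar>"])
        (use intX bCY[of n] in \<open>auto simp: abs_mult intro!: mult_right_mono elim!: AE_mp\<close>)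
    have "(\<integral>w. X w * CY n w \<partial>M) = (\<integral>w. CY n w * X w \<partial>M)" by (simp add: mult.commute)
    also have "\<dots> = (\<integral>w. CY n w * GX w \<partial>M)"
      by (rule tower_ae[OF sf _ _ _ i1 cX]) auto
    also have "\<dots> = (\<integral>w. GX w * real_cond_exp M F (TY n) w \<partial>M)"
      by (simp add: CY_def mult.commute)
    also have "\<dots> = (\<integral>w. GX w * TY n w \<partial>M)"
    proof -
      have i: "integrable M (\<lambda>w. GX w * TY n w)"
        by (rule Bochner_Integration.integrable_bound[where f="\<lambda>w. real n * \<bar>GX w\<bar>"])
          (use intGX in \<open>auto simp: abs_mult intro!: AE_I2 mult_left_mono[of _ _ "\<bar>GX _\<bar>", THEN order_trans[OF _ eq_refl]] bTY\<close>)
      show ?thesis using real_cond_exp_intg(2)[OF i] by simp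
    qed
    finally show ?thesis using c by simp
  qed
  have e: "(\<integral>w. X w * Y w \<partial>M) = (\<integral>w. GX w * Y w \<partial>M)"
  proof -
    have l1: "(\<lambda>n. \<integral>w. X w * TY n w \<partial>M) \<longlonglongrightarrow> (\<integral>w. X w * Y w \<partial>M)"
    proof (rule integral_dominated_convergence[where w="\<lambda>w. \<bar>X w * Y w\<bar>"])
      show "AE w in M. (\<lambda>n. X w * TY n w) \<longlonglongrightarrow> X w * Y w"
        unfolding TY_def by (intro AE_I2 tendsto_mult trunc_lim tendsto_const)
      show "AE w in M. norm (X w * TY n w) \<le> \<bar>X w * Y w\<bar>" for n
        by (intro AE_I2) (auto simp: abs_mult TY_def intro!: mult_left_mono trunc_abs2)
    qed (use iXY in auto)
    have l2: "(\<lambda>n. \<integral>w. GX w * TY n w \<partial>M) \<longlonglongrightarrow> (\<integral>w. GX w * Y w \<partial>M)"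
    proof (rule integral_dominated_convergence[where w="\<lambda>w. \<bar>GX w * Y w\<bar>"])
      show "AE w in M. (\<lambda>n. GX w * TY n w) \<longlonglongrightarrow> GX w * Y w"
        unfolding TY_def by (intro AE_I2 tendsto_mult trunc_lim tendsto_const)
      show "AE w in M. norm (GX w * TY n w) \<le> \<bar>GX w * Y w\<bar>" for n
        by (intro AE_I2) (auto simp: abs_mult TY_def intro!: mult_left_mono trunc_abs2)
    qed (use iGXY in auto)
    show ?thesis using LIMSEQ_unique[OF l1] l2 d by simp
  qed
  have f1: "(\<integral>w. GX w * Y w \<partial>M) = (\<integral>w. GX w * GY w \<partial>M)"
    by (rule tower_ae[OF sf _ _ _ iGXY cY]) auto
  have f2: "(\<integral>w. GY w * X w \<partial>M) = (\<integral>w. GY w * GX w \<partial>M)"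
    by (rule tower_ae[OF sf _ _ _ iGYX cX]) auto
  have "(\<integral>w. (X w - GX w) * (Y w - GY w) \<partial>M)
      = (\<integral>w. X w * Y w \<partial>M) - (\<integral>w. GY w * X w \<partial>M) - (\<integral>w. GX w * Y w \<partial>M) + (\<integral>w. GX w * GY w \<partial>M)"
  proof -
    have "(\<lambda>w. (X w - GX w) * (Y w - GY w)) = (\<lambda>w. X w * Y w - GY w * X w - GX w * Y w + GX w * GY w)"
      by (auto simp: algebra_simps)
    then show ?thesis using iXY iGYX iGXY iGXGY by simp
  qed
  also have "\<dots> = 0" using e f1 f2 by (simp add: mult.commute)
  finally show ?thesis .
qed

lemma meas_sigma_gen:
  assumes "G \<subseteq> Pow \<Omega>" "\<And>A. A \<in> sets borel \<Longrightarrow> f -` A \<inter> \<Omega> \<in> G"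
  shows "f \<in> borel_measurable (sigma \<Omega> G)"
proof (rule measurableI)
  fix A :: "'b set" assume "A \<in> sets borel"
  then have "f -` A \<inter> \<Omega> \<in> G" by (rule assms(2))
  then show "f -` A \<inter> space (sigma \<Omega> G) \<in> sets (sigma \<Omega> G)"
    using assms(1) by (simp add: sets_measure_of space_measure_of_conv sigma_sets.Basic)
qed simp

locale fed = prob_space M for M :: "'a measure" +
  fixes P :: "'a \<Rightarrow> real^'r^'d" and g :: "nat \<Rightarrow> nat \<Rightarrow> 'a \<Rightarrow> real^'d"
    and gradF :: "nat \<Rightarrow> real^'d \<Rightarrow> real^'d" and gradf :: "real^'d \<Rightarrow> real^'d"
    and th0 :: "real^'d" and N \<tau> :: nat and \<mu> \<eta> L \<sigma>L :: real
  assumes N_pos: "N > 0" and mu0: "0 \<le> \<mu>" and mu1: "\<mu> < 1" and Lpos: "L > 0"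
    and grad_avg: "\<And>x. gradf x = (1 / real N) *\<^sub>R (\<Sum>i<N. gradF i x)"
    and F_smooth: "\<And>i x y. i < N \<Longrightarrow> norm (gradF i x - gradF i y) \<le> L * norm (x - y)"
    and haar: "haar_stiefel M P"
    and g_meas: "\<And>i s. i < N \<Longrightarrow> s < \<tau> \<Longrightarrow> g i s \<in> borel_measurable M"
    and unbiased: "\<And>i s k. i < N \<Longrightarrow> s < \<tau> \<Longrightarrow>
        AE \<omega> in M. real_cond_exp M (past_sa M N P g s) (\<lambda>\<omega>. g i s \<omega> $ k) \<omega>
                    = gradF i (client_theta \<eta> \<mu> th0 P g i s \<omega>) $ k"
    and variance: "\<And>i s. i < N \<Longrightarrow> s < \<tau> \<Longrightarrow>
        AE \<omega> in M. nn_cond_exp M (past_sa M N P g s)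
            (\<lambda>\<omega>. ennreal ((norm (g i s \<omega> - gradF i (client_theta \<eta> \<mu> th0 P g i s \<omega>)))\<^sup>2)) \<omega>
          \<le> ennreal (\<sigma>L\<^sup>2)"
    and cond_indep: "\<And>s (h :: nat \<Rightarrow> real^'d \<Rightarrow> real) B. s < \<tau> \<Longrightarrow>
        (\<And>i. h i \<in> borel_measurable borel) \<Longrightarrow> (\<And>i x. \<bar>h i x\<bar> \<le> B) \<Longrightarrow>
        AE \<omega> in M. real_cond_exp M (past_sa M N P g s) (\<lambda>\<omega>. \<Prod>i<N. h i (g i s \<omega>)) \<omega>
                    = (\<Prod>i<N. real_cond_exp M (past_sa M N P g s) (\<lambda>\<omega>. h i (g i s \<omega>)) \<omega>)"
begin

abbreviation "th \<equiv> client_theta \<eta> \<mu> th0 P g"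
abbreviation "Fs s \<equiv> past_sa M N P g s"

lemma P_meas [measurable]: "P \<in> borel_measurable M"
  and PP: "\<omega> \<in> space M \<Longrightarrow> transpose (P \<omega>) ** P \<omega> = mat 1"
  using haar unfolding haar_stiefel_def by auto

lemma gens_sub:
  assumes "s \<le> \<tau>"
  shows "{P -` A \<inter> space M | A. A \<in> sets borel} \<union>
      {g j q -` A \<inter> space M | j q A. j < N \<and> q < s \<and> A \<in> sets borel} \<subseteq> sets M"
  using assms g_meas by (auto simp: measurable_sets)

lemma gens_pow:
  "{P -` A \<inter> space M | A. A \<in> sets borel} \<union>
      {g j q -` A \<inter> space M | j q A. j < N \<and> q < s \<and> A \<in> sets borel} \<subseteq> Pow (space M)"
  by auto

lemma subalg_Fs:
  assumes "s \<le> \<tau>"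
  shows "subalgebra M (Fs s)"
  unfolding subalgebra_def past_sa_def
  using gens_sub[OF assms] gens_pow[of s]
  by (simp add: space_measure_of_conv sets_measure_of sets.sigma_sets_subset)

lemma sfs_Fs:
  assumes "s \<le> \<tau>"
  shows "sigma_finite_subalgebra M (Fs s)"
proof -
  have "finite_measure_subalgebra M (Fs s)"
    by (unfold_locales) (rule subalg_Fs[OF assms])
  then show ?thesis by (rule finite_measure_subalgebra_is_sigma_finite)
qed

lemma P_meas_Fs: "P \<in> borel_measurable (Fs s)"
  unfolding past_sa_def by (rule meas_sigma_gen[OF gens_pow]) auto

lemma g_meas_Fs: "j < N \<Longrightarrow> q < s \<Longrightarrow> g j q \<in> borel_measurable (Fs s)"
  unfolding past_sa_def by (rule meas_sigma_gen[OF gens_pow]) blast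

lemma th_closed:
  "th i s \<omega> = th0 - \<eta> *\<^sub>R (\<Sum>q<s. mom_alpha \<mu> s q *\<^sub>R ((P \<omega> ** transpose (P \<omega>)) *v g i q \<omega>))"
  using mu1 unfolding client_theta_def by (simp add: local_iter_closed)

lemma th_meas_gen:
  assumes "\<And>q. q < s \<Longrightarrow> g i q \<in> borel_measurable MM" and "P \<in> borel_measurable MM"
  shows "th i s \<in> borel_measurable MM"
proof -
  have "th i s = (\<lambda>\<omega>. th0 - \<eta> *\<^sub>R (\<Sum>q<s. mom_alpha \<mu> s q *\<^sub>R ((P \<omega> ** transpose (P \<omega>)) *v g i q \<omega>)))"
    by (rule ext) (rule th_closed)
  also have "\<dots> \<in> borel_measurable MM"
    by (intro borel_measurable_diff borel_measurable_const borel_measurable_scaleR borel_measurable_sum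
        measurable_mv measurable_mm measurable_transpose assms) auto
  finally show ?thesis .
qed

lemma th_meas_Fs: "i < N \<Longrightarrow> s \<le> s' \<Longrightarrow> th i s \<in> borel_measurable (Fs s')"
  by (rule th_meas_gen) (auto intro: g_meas_Fs P_meas_Fs)

lemma th_meas: "i < N \<Longrightarrow> s \<le> \<tau> \<Longrightarrow> th i s \<in> borel_measurable M"
  by (rule th_meas_gen) (auto intro: g_meas)

lemma gradF_cont: "i < N \<Longrightarrow> continuous_on UNIV (gradF i)"
  by (rule lipschitz_on_continuous_on[of L]) (auto intro!: lipschitz_onI F_smooth simp: dist_norm Lpos less_imp_le)

lemma gradF_meas [measurable]: "i < N \<Longrightarrow> gradF i \<in> borel_measurable borel"
  by (rule borel_measurable_continuous_onI[OF gradF_cont])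

end

lemma norm_add_sq_le: "(norm (a + b :: 'c::real_normed_vector))\<^sup>2 \<le> 2 * (norm a)\<^sup>2 + 2 * (norm b)\<^sup>2"
proof -
  have "norm (a + b) \<le> norm a + norm b" by (rule norm_triangle_ineq)
  then have "(norm (a + b))\<^sup>2 \<le> (norm a + norm b)\<^sup>2" by (simp add: power_mono)
  also have "\<dots> \<le> 2 * (norm a)\<^sup>2 + 2 * (norm b)\<^sup>2"
    using sum_squares_bound[of "norm a" "norm b"] by (simp add: power2_sum)
  finally show ?thesis .
qed

lemma prod_two:
  fixes a b :: "nat \<Rightarrow> real"
  assumes "finite A" "i \<in> A" "j \<in> A" "i \<noteq> j"
  shows "(\<Prod>l\<in>A. if l = i then a l else if l = j then b l else 1) = a i * b j"
proof -
  have "(\<Prod>l\<in>A. if l = i then a l else if l = j then b l else 1)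
      = (if i = i then a i else if i = j then b i else 1) * (\<Prod>l\<in>A - {i}. if l = i then a l else if l = j then b l else 1)"
    by (rule prod.remove[OF assms(1,2)])
  also have "(\<Prod>l\<in>A - {i}. if l = i then a l else if l = j then b l else 1)
      = (if j = i then a j else if j = j then b j else 1) * (\<Prod>l\<in>A - {i} - {j}. if l = i then a l else if l = j then b l else 1)"
    by (rule prod.remove) (use assms in auto)
  also have "(\<Prod>l\<in>A - {i} - {j}. if l = i then a l else if l = j then b l else 1) = 1"
    by (rule prod.neutral) auto
  finally show ?thesis using assms by simp
qed

lemma sq_int_bound:
  fixes X :: "'a \<Rightarrow> 'c::real_normed_vector"
  assumes "integrable M f" "X \<in> borel_measurable M" "\<And>w. w \<in> space M \<Longrightarrow> (norm (X w))\<^sup>2 \<le> f w"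
  shows "integrable M (\<lambda>w. (norm (X w))\<^sup>2)"
proof (rule Bochner_Integration.integrable_bound[OF assms(1)])
  show "AE w in M. norm ((norm (X w))\<^sup>2) \<le> norm (f w)"
    using assms(3) by (intro AE_I2) (smt (verit, ccfv_SIG) real_norm_def zero_le_power2)
qed (use assms(2) in measurable)

context fed
begin

lemma cross_indep:
  assumes q: "q < \<tau>" and ij: "i < N" "j < N" "i \<noteq> j"
  shows "AE w in M. real_cond_exp M (Fs q) (\<lambda>w. trunc (real m) (g i q w $ k) * trunc (real n) (g j q w $ k)) w
        = real_cond_exp M (Fs q) (\<lambda>w. trunc (real m) (g i q w $ k)) w * real_cond_exp M (Fs q) (\<lambda>w. trunc (real n) (g j q w $ k)) w"
proof -
  interpret sf: sigma_finite_subalgebra M "Fs q" using sfs_Fs q by simp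
  define h where "h = (\<lambda>l (x::real^'d). if l = i then trunc (real m) (x $ k) else if l = j then trunc (real n) (x $ k) else 1)"
  have hm: "h l \<in> borel_measurable borel" for l
    unfolding h_def by (cases "l = i"; cases "l = j") auto
  have hb: "\<bar>h l x\<bar> \<le> real m + real n + 1" for l x
    unfolding h_def using trunc_abs[of "real m" "x $ k"] trunc_abs[of "real n" "x $ k"] by auto
  have ci: "AE w in M. real_cond_exp M (Fs q) (\<lambda>w. \<Prod>l<N. h l (g l q w)) w
       = (\<Prod>l<N. real_cond_exp M (Fs q) (\<lambda>w. h l (g l q w)) w)"
    by (rule cond_indep[OF q hm hb])
  have one: "AE w in M. real_cond_exp M (Fs q) (\<lambda>w. 1) w = 1"
    by (rule sf.real_cond_exp_F_meas) auto
  have e1: "(\<lambda>w. \<Prod>l<N. h l (g l q w)) = (\<lambda>w. trunc (real m) (g i q w $ k) * trunc (real n) (g j q w $ k))"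
  proof (rule ext)
    fix w
    have "(\<Prod>l<N. h l (g l q w)) = (\<Prod>l<N. if l = i then trunc (real m) (g l q w $ k) else if l = j then trunc (real n) (g l q w $ k) else 1)"
      by (rule prod.cong) (auto simp: h_def)
    also have "\<dots> = trunc (real m) (g i q w $ k) * trunc (real n) (g j q w $ k)"
      by (rule prod_two[where a="\<lambda>l. trunc (real m) (g l q w $ k)" and b="\<lambda>l. trunc (real n) (g l q w $ k)"]) (use ij in auto)
    finally show "(\<Prod>l<N. h l (g l q w)) = trunc (real m) (g i q w $ k) * trunc (real n) (g j q w $ k)" .
  qed
  show ?thesis
    using ci one
  proof eventually_elim
    case (elim w)
    have "(\<Prod>l<N. real_cond_exp M (Fs q) (\<lambda>w. h l (g l q w)) w)
       = (\<Prod>l<N. if l = i then real_cond_exp M (Fs q) (\<lambda>w. trunc (real m) (g i q w $ k)) w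
            else if l = j then real_cond_exp M (Fs q) (\<lambda>w. trunc (real n) (g j q w $ k)) w else 1)"
      by (rule prod.cong) (use elim ij in \<open>auto simp: h_def\<close>)
    also have "\<dots> = real_cond_exp M (Fs q) (\<lambda>w. trunc (real m) (g i q w $ k)) w * real_cond_exp M (Fs q) (\<lambda>w. trunc (real n) (g j q w $ k)) w"
      by (rule prod_two[where a="\<lambda>_. real_cond_exp M (Fs q) (\<lambda>w. trunc (real m) (g i q w $ k)) w"
            and b="\<lambda>_. real_cond_exp M (Fs q) (\<lambda>w. trunc (real n) (g j q w $ k)) w"]) (use ij in auto)
    finally show ?case using elim(1) e1 by simp
  qed
qed

end

lemma norm_add_sq_eq: "(norm (a + b :: 'c::real_inner))\<^sup>2 = (norm a)\<^sup>2 + 2 * (a \<bullet> b) + (norm b)\<^sup>2"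
  by (simp add: power2_norm_eq_inner inner_add_left inner_add_right inner_commute)

lemma inner_vec_real: "(x::real^'n) \<bullet> y = (\<Sum>k\<in>UNIV. x $ k * y $ k)"
  by (simp add: inner_vec_def)

context fed
begin

lemma step_q:
  assumes q: "q < \<tau>" and fin: "\<And>i. i < N \<Longrightarrow> integrable M (\<lambda>\<omega>. (norm (th i q \<omega> - th0))\<^sup>2)"
  shows "(\<integral>\<^sup>+\<omega>. ennreal ((norm ((P \<omega> ** transpose (P \<omega>)) *v ((1 / real N) *\<^sub>R (\<Sum>i<N. g i q \<omega>))))\<^sup>2) \<partial>M)
     \<le> ennreal (2 * (real CARD('r) / real CARD('d)) * (norm (gradf th0))\<^sup>2 + \<sigma>L\<^sup>2 / real N
        + 2 * L\<^sup>2 * ((1 / real N) * (\<Sum>i<N. \<integral>\<omega>. (norm (th i q \<omega> - th0))\<^sup>2 \<partial>M)))"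
proof -
  have sfs: "sigma_finite_subalgebra M (Fs q)" using sfs_Fs q by simp
  interpret sf: sigma_finite_subalgebra M "Fs q" by (rule sfs)
  define Pi where "Pi \<omega> = P \<omega> ** transpose (P \<omega>)" for \<omega>
  define G where "G i \<omega> = gradF i (th i q \<omega>)" for i \<omega>
  define e where "e i \<omega> = g i q \<omega> - G i \<omega>" for i \<omega>
  define Gb where "Gb \<omega> = (1 / real N) *\<^sub>R (\<Sum>i<N. G i \<omega>)" for \<omega>
  define eb where "eb \<omega> = (1 / real N) *\<^sub>R (\<Sum>i<N. e i \<omega>)" for \<omega>
  define Y where "Y \<omega> = Pi \<omega> *v Gb \<omega>" for \<omega>
  define v0 where "v0 = gradf th0"
  define D where "D i \<omega> = (norm (th i q \<omega> - th0))\<^sup>2" for i \<omega>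
  have sub: "subalgebra M (Fs q)" by (rule sf.subalg)
  have mg: "i < N \<Longrightarrow> g i q \<in> borel_measurable M" for i using g_meas q by simp
  have mthF: "i < N \<Longrightarrow> th i q \<in> borel_measurable (Fs q)" for i by (rule th_meas_Fs) auto
  have Ge: "G i = (\<lambda>\<omega>. gradF i (th i q \<omega>))" for i by (rule ext) (simp add: G_def)
  have mGF: "i < N \<Longrightarrow> G i \<in> borel_measurable (Fs q)" for i
    unfolding Ge by (rule measurable_compose[OF mthF gradF_meas])
  have mG: "i < N \<Longrightarrow> G i \<in> borel_measurable M" for i
    using measurable_from_subalg[OF sub mGF] by simp
  have ee: "e i = (\<lambda>\<omega>. g i q \<omega> - G i \<omega>)" for i by (rule ext) (simp add: e_def)
  have me: "i < N \<Longrightarrow> e i \<in> borel_measurable M" for i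
    unfolding ee by (intro borel_measurable_diff mg mG)
  have Pie: "Pi = (\<lambda>\<omega>. P \<omega> ** transpose (P \<omega>))" by (rule ext) (simp add: Pi_def)
  have mPiF: "Pi \<in> borel_measurable (Fs q)"
    unfolding Pie by (intro measurable_mm measurable_transpose P_meas_Fs)
  have Gbe: "Gb = (\<lambda>\<omega>. (1 / real N) *\<^sub>R (\<Sum>i<N. G i \<omega>))" by (rule ext) (simp add: Gb_def)
  have mGbF: "Gb \<in> borel_measurable (Fs q)"
    unfolding Gbe by (intro borel_measurable_scaleR borel_measurable_const borel_measurable_sum mGF) auto
  have Ye: "Y = (\<lambda>\<omega>. Pi \<omega> *v Gb \<omega>)" by (rule ext) (simp add: Y_def)
  have mYF: "Y \<in> borel_measurable (Fs q)"
    unfolding Ye by (intro measurable_mv mPiF mGbF)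
  have mY: "Y \<in> borel_measurable M" using measurable_from_subalg[OF sub mYF] by simp
  have mGb: "Gb \<in> borel_measurable M" using measurable_from_subalg[OF sub mGbF] by simp
  have mPi: "Pi \<in> borel_measurable M" using measurable_from_subalg[OF sub mPiF] by simp
  have ebe: "eb = (\<lambda>\<omega>. (1 / real N) *\<^sub>R (\<Sum>i<N. e i \<omega>))" by (rule ext) (simp add: eb_def)
  have meb: "eb \<in> borel_measurable M"
    unfolding ebe by (intro borel_measurable_scaleR borel_measurable_const borel_measurable_sum me) auto
  have mD: "i < N \<Longrightarrow> D i \<in> borel_measurable M" for i
    using fin[of i] unfolding D_def[abs_def] by (simp add: borel_measurable_integrable)
  have iD: "i < N \<Longrightarrow> integrable M (D i)" for i
    using fin[of i] unfolding D_def[abs_def] by simp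
  have pPP: "\<omega> \<in> space M \<Longrightarrow> transpose (P \<omega>) ** P \<omega> = mat 1" for \<omega> by (rule PP)
  have iG: "i < N \<Longrightarrow> integrable M (\<lambda>\<omega>. (norm (G i \<omega>))\<^sup>2)" for i
  proof (rule sq_int_bound[where f="\<lambda>\<omega>. 2 * (norm (gradF i th0))\<^sup>2 + 2 * (L\<^sup>2 * D i \<omega>)"])
    assume i: "i < N"
    show "integrable M (\<lambda>\<omega>. 2 * (norm (gradF i th0))\<^sup>2 + 2 * (L\<^sup>2 * D i \<omega>))"
      using iD[OF i] by auto
    show "G i \<in> borel_measurable M" by (rule mG[OF i])
    fix \<omega>
    have "(norm (G i \<omega>))\<^sup>2 = (norm (gradF i th0 + (G i \<omega> - gradF i th0)))\<^sup>2" by simp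
    also have "\<dots> \<le> 2 * (norm (gradF i th0))\<^sup>2 + 2 * (norm (G i \<omega> - gradF i th0))\<^sup>2"
      by (rule norm_add_sq_le)
    also have "(norm (G i \<omega> - gradF i th0))\<^sup>2 \<le> (L * norm (th i q \<omega> - th0))\<^sup>2"
      unfolding G_def by (rule power_mono[OF F_smooth[OF i]]) simp
    finally show "(norm (G i \<omega>))\<^sup>2 \<le> 2 * (norm (gradF i th0))\<^sup>2 + 2 * (L\<^sup>2 * D i \<omega>)"
      by (simp add: D_def power_mult_distrib)
  qed
  have ie_nn: "i < N \<Longrightarrow> (\<integral>\<^sup>+\<omega>. ennreal ((norm (e i \<omega>))\<^sup>2) \<partial>M) \<le> ennreal (\<sigma>L\<^sup>2)" for i
  proof -
    assume i: "i < N"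
    have [measurable]: "e i \<in> borel_measurable M" by (rule me[OF i])
    have mh: "(\<lambda>\<omega>. ennreal ((norm (e i \<omega>))\<^sup>2)) \<in> borel_measurable M"
      by measurable
    have "(\<integral>\<^sup>+\<omega>. ennreal ((norm (e i \<omega>))\<^sup>2) \<partial>M) = (\<integral>\<^sup>+\<omega>. 1 * ennreal ((norm (e i \<omega>))\<^sup>2) \<partial>M)" by simp
    also have "\<dots> = (\<integral>\<^sup>+\<omega>. 1 * nn_cond_exp M (Fs q) (\<lambda>\<omega>. ennreal ((norm (e i \<omega>))\<^sup>2)) \<omega> \<partial>M)"
      by (rule sf.nn_cond_exp_intg[symmetric]) (auto intro: mh)
    also have "\<dots> \<le> (\<integral>\<^sup>+\<omega>. ennreal (\<sigma>L\<^sup>2) \<partial>M)"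
      using variance[OF i q] by (intro nn_integral_mono_AE) (auto simp: e_def G_def)
    also have "\<dots> = ennreal (\<sigma>L\<^sup>2)" by (simp add: emeasure_space_1)
    finally show ?thesis .
  qed
  have ie: "i < N \<Longrightarrow> integrable M (\<lambda>\<omega>. (norm (e i \<omega>))\<^sup>2)" for i
  proof (rule integrableI_bounded)
    assume i: "i < N"
    have [measurable]: "e i \<in> borel_measurable M" by (rule me[OF i])
    show "(\<lambda>\<omega>. (norm (e i \<omega>))\<^sup>2) \<in> borel_measurable M" by measurable
    show "(\<integral>\<^sup>+\<omega>. ennreal (norm ((norm (e i \<omega>))\<^sup>2)) \<partial>M) < \<infinity>"
      using ie_nn[OF i] by (simp add: order_le_less_trans)
  qed
  have ie_le: "i < N \<Longrightarrow> (\<integral>\<omega>. (norm (e i \<omega>))\<^sup>2 \<partial>M) \<le> \<sigma>L\<^sup>2" for i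
  proof -
    assume i: "i < N"
    have "ennreal (\<integral>\<omega>. (norm (e i \<omega>))\<^sup>2 \<partial>M) = (\<integral>\<^sup>+\<omega>. ennreal ((norm (e i \<omega>))\<^sup>2) \<partial>M)"
      by (rule nn_integral_eq_integral[symmetric, OF ie[OF i]]) auto
    also have "\<dots> \<le> ennreal (\<sigma>L\<^sup>2)" by (rule ie_nn[OF i])
    finally show ?thesis by (simp add: ennreal_le_iff)
  qed
  have ig: "i < N \<Longrightarrow> integrable M (\<lambda>\<omega>. (norm (g i q \<omega>))\<^sup>2)" for i
  proof (rule sq_int_bound[where f="\<lambda>\<omega>. 2 * (norm (G i \<omega>))\<^sup>2 + 2 * (norm (e i \<omega>))\<^sup>2"])
    assume i: "i < N"
    show "integrable M (\<lambda>\<omega>. 2 * (norm (G i \<omega>))\<^sup>2 + 2 * (norm (e i \<omega>))\<^sup>2)"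
      using iG[OF i] ie[OF i] by auto
    show "g i q \<in> borel_measurable M" by (rule mg[OF i])
    fix \<omega>
    have "g i q \<omega> = G i \<omega> + e i \<omega>" by (simp add: e_def)
    then show "(norm (g i q \<omega>))\<^sup>2 \<le> 2 * (norm (G i \<omega>))\<^sup>2 + 2 * (norm (e i \<omega>))\<^sup>2"
      using norm_add_sq_le[of "G i \<omega>" "e i \<omega>"] by simp
  qed
  have iGb: "integrable M (\<lambda>\<omega>. (norm (Gb \<omega>))\<^sup>2)"
  proof (rule sq_int_bound[where f="\<lambda>\<omega>. (1 / real N) * (\<Sum>i<N. (norm (G i \<omega>))\<^sup>2)"])
    show "integrable M (\<lambda>\<omega>. (1 / real N) * (\<Sum>i<N. (norm (G i \<omega>))\<^sup>2))"
      by (intro Bochner_Integration.integrable_mult_right Bochner_Integration.integrable_sum) (auto intro: iG)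
    show "Gb \<in> borel_measurable M" by (rule mGb)
    fix \<omega> show "(norm (Gb \<omega>))\<^sup>2 \<le> (1 / real N) * (\<Sum>i<N. (norm (G i \<omega>))\<^sup>2)"
      unfolding Gb_def by (rule norm_avg_sq[OF N_pos])
  qed
  have ieb: "integrable M (\<lambda>\<omega>. (norm (eb \<omega>))\<^sup>2)"
  proof (rule sq_int_bound[where f="\<lambda>\<omega>. (1 / real N) * (\<Sum>i<N. (norm (e i \<omega>))\<^sup>2)"])
    show "integrable M (\<lambda>\<omega>. (1 / real N) * (\<Sum>i<N. (norm (e i \<omega>))\<^sup>2))"
      by (intro Bochner_Integration.integrable_mult_right Bochner_Integration.integrable_sum) (auto intro: ie)
    show "eb \<in> borel_measurable M" by (rule meb)
    fix \<omega> show "(norm (eb \<omega>))\<^sup>2 \<le> (1 / real N) * (\<Sum>i<N. (norm (e i \<omega>))\<^sup>2)"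
      unfolding eb_def by (rule norm_avg_sq[OF N_pos])
  qed
  have iY: "integrable M (\<lambda>\<omega>. (norm (Y \<omega>))\<^sup>2)"
  proof (rule sq_int_bound[OF iGb mY])
    fix \<omega> assume "\<omega> \<in> space M"
    then show "(norm (Y \<omega>))\<^sup>2 \<le> (norm (Gb \<omega>))\<^sup>2"
      unfolding Y_def Pi_def by (intro power_mono stiefel_proj_le pPP) auto
  qed
  have mgk: "i < N \<Longrightarrow> (\<lambda>\<omega>. g i q \<omega> $ k) \<in> borel_measurable M" for i k
    by (rule measurable_vec_nth[OF mg])
  have mGk: "i < N \<Longrightarrow> (\<lambda>\<omega>. G i \<omega> $ k) \<in> borel_measurable M" for i k
    by (rule measurable_vec_nth[OF mG])
  have mGkF: "i < N \<Longrightarrow> (\<lambda>\<omega>. G i \<omega> $ k) \<in> borel_measurable (Fs q)" for i k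
    by (rule measurable_vec_nth[OF mGF])
  have mek: "i < N \<Longrightarrow> (\<lambda>\<omega>. e i \<omega> $ k) \<in> borel_measurable M" for i k
    by (rule measurable_vec_nth[OF me])
  have mYk: "(\<lambda>\<omega>. Y \<omega> $ k) \<in> borel_measurable M" for k
    by (rule measurable_vec_nth[OF mY])
  have mYkF: "(\<lambda>\<omega>. Y \<omega> $ k) \<in> borel_measurable (Fs q)" for k
    by (rule measurable_vec_nth[OF mYF])
  have igk: "i < N \<Longrightarrow> integrable M (\<lambda>\<omega>. (g i q \<omega> $ k)\<^sup>2)" for i k
    by (rule int_vec_comp_sq[OF mg ig])
  have iGk: "i < N \<Longrightarrow> integrable M (\<lambda>\<omega>. (G i \<omega> $ k)\<^sup>2)" for i k
    by (rule int_vec_comp_sq[OF mG iG])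
  have iek: "i < N \<Longrightarrow> integrable M (\<lambda>\<omega>. (e i \<omega> $ k)\<^sup>2)" for i k
    by (rule int_vec_comp_sq[OF me ie])
  have iYk: "integrable M (\<lambda>\<omega>. (Y \<omega> $ k)\<^sup>2)" for k
    by (rule int_vec_comp_sq[OF mY iY])
  have unb: "i < N \<Longrightarrow> AE \<omega> in M. real_cond_exp M (Fs q) (\<lambda>\<omega>. g i q \<omega> $ k) \<omega> = G i \<omega> $ k" for i k
    using unbiased[of i q k] q by (simp add: G_def)
  have iYe: "integrable M (\<lambda>\<omega>. Y \<omega> $ k * e i \<omega> $ k)" if i: "i < N" for i k
    by (rule int_prod_sq[OF mYk mek[OF i] iYk iek[OF i]])
  have zero_ik: "(\<integral>\<omega>. Y \<omega> $ k * e i \<omega> $ k \<partial>M) = 0" if i: "i < N" for i k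
  proof -
    have i1: "integrable M (\<lambda>\<omega>. Y \<omega> $ k * g i q \<omega> $ k)"
      by (rule int_prod_sq[OF mYk mgk[OF i] iYk igk[OF i]])
    have i2: "integrable M (\<lambda>\<omega>. Y \<omega> $ k * G i \<omega> $ k)"
      by (rule int_prod_sq[OF mYk mGk[OF i] iYk iGk[OF i]])
    have t: "(\<integral>\<omega>. Y \<omega> $ k * g i q \<omega> $ k \<partial>M) = (\<integral>\<omega>. Y \<omega> $ k * G i \<omega> $ k \<partial>M)"
      by (rule tower_ae[OF sfs mYkF mgk[OF i] mGk[OF i] i1 unb[OF i]])
    have "(\<integral>\<omega>. Y \<omega> $ k * e i \<omega> $ k \<partial>M) = (\<integral>\<omega>. Y \<omega> $ k * g i q \<omega> $ k - Y \<omega> $ k * G i \<omega> $ k \<partial>M)"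
      by (simp add: e_def right_diff_distrib)
    also have "\<dots> = 0" using i1 i2 t by simp
    finally show ?thesis .
  qed
  have c1: "(\<integral>\<omega>. Y \<omega> \<bullet> eb \<omega> \<partial>M) = 0"
  proof -
    have Yeb: "Y \<omega> \<bullet> eb \<omega> = (1 / real N) * (\<Sum>i<N. \<Sum>k\<in>UNIV. Y \<omega> $ k * e i \<omega> $ k)" for \<omega>
    proof -
      have "Y \<omega> \<bullet> eb \<omega> = (1 / real N) * (\<Sum>i<N. Y \<omega> \<bullet> e i \<omega>)"
        by (simp add: eb_def inner_sum_right)
      then show ?thesis by (simp add: inner_vec_real)
    qed
    have "(\<integral>\<omega>. Y \<omega> \<bullet> eb \<omega> \<partial>M) = (1 / real N) * (\<Sum>i<N. \<Sum>k\<in>UNIV. (\<integral>\<omega>. Y \<omega> $ k * e i \<omega> $ k \<partial>M))"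
    proof -
      have s1: "(\<integral>\<omega>. (\<Sum>k\<in>UNIV. Y \<omega> $ k * e i \<omega> $ k) \<partial>M) = (\<Sum>k\<in>UNIV. (\<integral>\<omega>. Y \<omega> $ k * e i \<omega> $ k \<partial>M))"
        if i: "i < N" for i
        by (rule Bochner_Integration.integral_sum) (rule iYe[OF i])
      have s2: "(\<integral>\<omega>. (\<Sum>i<N. \<Sum>k\<in>UNIV. Y \<omega> $ k * e i \<omega> $ k) \<partial>M)
          = (\<Sum>i<N. (\<integral>\<omega>. (\<Sum>k\<in>UNIV. Y \<omega> $ k * e i \<omega> $ k) \<partial>M))"
        by (rule Bochner_Integration.integral_sum) (auto intro!: Bochner_Integration.integrable_sum iYe)
      show ?thesis unfolding Yeb Bochner_Integration.integral_mult_right_zero s2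
        by (simp add: s1)
    qed
    also have "\<dots> = 0" by (simp add: zero_ik)
    finally show ?thesis .
  qed
  have iee: "integrable M (\<lambda>\<omega>. e i \<omega> \<bullet> e j \<omega>)" if i: "i < N" and j: "j < N" for i j
    unfolding inner_vec_real
    by (intro Bochner_Integration.integrable_sum int_prod_sq mek iek i j)
  have cc0: "(\<integral>\<omega>. e i \<omega> \<bullet> e j \<omega> \<partial>M) = 0" if i: "i < N" and j: "j < N" and ij: "i \<noteq> j" for i j
  proof -
    have "(\<integral>\<omega>. e i \<omega> \<bullet> e j \<omega> \<partial>M) = (\<Sum>k\<in>UNIV. (\<integral>\<omega>. e i \<omega> $ k * e j \<omega> $ k \<partial>M))"
      unfolding inner_vec_real
      by (rule Bochner_Integration.integral_sum) (intro int_prod_sq mek iek i j)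
    also have "\<dots> = 0"
    proof (rule sum.neutral, intro ballI)
      fix k
      have "(\<integral>\<omega>. (g i q \<omega> $ k - G i \<omega> $ k) * (g j q \<omega> $ k - G j \<omega> $ k) \<partial>M) = 0"
        by (rule indep_cross_generic[OF prob_space_axioms sfs mgk[OF i] mgk[OF j] mGkF[OF i] mGkF[OF j]
              igk[OF i] igk[OF j] iGk[OF i] iGk[OF j] unb[OF i] unb[OF j] cross_indep[OF q i j ij]])
      then show "(\<integral>\<omega>. e i \<omega> $ k * e j \<omega> $ k \<partial>M) = 0" by (simp add: e_def)
    qed
    finally show ?thesis .
  qed
  have c2: "(\<integral>\<omega>. (norm (eb \<omega>))\<^sup>2 \<partial>M) \<le> \<sigma>L\<^sup>2 / real N"
  proof -
    have ebsq: "(norm (eb \<omega>))\<^sup>2 = (1 / real N)\<^sup>2 * (\<Sum>i<N. \<Sum>j<N. e i \<omega> \<bullet> e j \<omega>)" for \<omega>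
    proof -
      have "(norm (\<Sum>i<N. e i \<omega>))\<^sup>2 = (\<Sum>i<N. \<Sum>j<N. e i \<omega> \<bullet> e j \<omega>)"
        by (simp only: power2_norm_eq_inner inner_sum_left inner_sum_right) (subst sum.swap, simp add: inner_commute)
      then show ?thesis by (simp add: eb_def power_divide)
    qed
    have "(\<integral>\<omega>. (norm (eb \<omega>))\<^sup>2 \<partial>M) = (1 / real N)\<^sup>2 * (\<Sum>i<N. \<Sum>j<N. (\<integral>\<omega>. e i \<omega> \<bullet> e j \<omega> \<partial>M))"
    proof -
      have s1: "(\<integral>\<omega>. (\<Sum>j<N. e i \<omega> \<bullet> e j \<omega>) \<partial>M) = (\<Sum>j<N. (\<integral>\<omega>. e i \<omega> \<bullet> e j \<omega> \<partial>M))"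
        if i: "i < N" for i
        by (rule Bochner_Integration.integral_sum) (auto intro: iee i)
      have s2: "(\<integral>\<omega>. (\<Sum>i<N. \<Sum>j<N. e i \<omega> \<bullet> e j \<omega>) \<partial>M)
          = (\<Sum>i<N. (\<integral>\<omega>. (\<Sum>j<N. e i \<omega> \<bullet> e j \<omega>) \<partial>M))"
        by (rule Bochner_Integration.integral_sum) (auto intro!: Bochner_Integration.integrable_sum iee)
      show ?thesis unfolding ebsq Bochner_Integration.integral_mult_right_zero s2
        by (simp add: s1)
    qed
    also have "(\<Sum>i<N. \<Sum>j<N. (\<integral>\<omega>. e i \<omega> \<bullet> e j \<omega> \<partial>M)) = (\<Sum>i<N. (\<integral>\<omega>. (norm (e i \<omega>))\<^sup>2 \<partial>M))"
    proof (rule sum.cong[OF refl])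
      fix i assume "i \<in> {..<N}"
      then have i: "i < N" by simp
      have "(\<Sum>j<N. (\<integral>\<omega>. e i \<omega> \<bullet> e j \<omega> \<partial>M)) = (\<Sum>j<N. if j = i then (\<integral>\<omega>. e i \<omega> \<bullet> e i \<omega> \<partial>M) else 0)"
        by (rule sum.cong[OF refl]) (auto simp: cc0[OF i])
      also have "\<dots> = (\<integral>\<omega>. e i \<omega> \<bullet> e i \<omega> \<partial>M)" using i by simp
      also have "\<dots> = (\<integral>\<omega>. (norm (e i \<omega>))\<^sup>2 \<partial>M)" by (simp add: power2_norm_eq_inner)
      finally show "(\<Sum>j<N. (\<integral>\<omega>. e i \<omega> \<bullet> e j \<omega> \<partial>M)) = (\<integral>\<omega>. (norm (e i \<omega>))\<^sup>2 \<partial>M)" .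
    qed
    also have "(1 / real N)\<^sup>2 * (\<Sum>i<N. (\<integral>\<omega>. (norm (e i \<omega>))\<^sup>2 \<partial>M)) \<le> (1 / real N)\<^sup>2 * (\<Sum>i<N. \<sigma>L\<^sup>2)"
      by (intro mult_left_mono sum_mono ie_le) auto
    also have "\<dots> = \<sigma>L\<^sup>2 / real N" using N_pos by (simp add: power2_eq_square field_simps)
    finally show ?thesis .
  qed
  have hv1: "integrable M (\<lambda>\<omega>. (norm (transpose (P \<omega>) *v v0))\<^sup>2)"
    and hv2: "(\<integral>\<omega>. (norm (transpose (P \<omega>) *v v0))\<^sup>2 \<partial>M) = real CARD('r) / real CARD('d) * (norm v0)\<^sup>2"
    using haar_expect[OF prob_space_axioms haar, of v0] by auto
  define R where "R \<omega> = 2 * (norm (transpose (P \<omega>) *v v0))\<^sup>2 + 2 * L\<^sup>2 * ((1 / real N) * (\<Sum>i<N. D i \<omega>))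
      + 2 * (Y \<omega> \<bullet> eb \<omega>) + (norm (eb \<omega>))\<^sup>2" for \<omega>
  have pw: "(norm ((P \<omega> ** transpose (P \<omega>)) *v ((1 / real N) *\<^sub>R (\<Sum>i<N. g i q \<omega>))))\<^sup>2 \<le> R \<omega>"
    if w: "\<omega> \<in> space M" for \<omega>
  proof -
    have PPw: "transpose (P \<omega>) ** P \<omega> = mat 1" by (rule pPP[OF w])
    have gs: "(1 / real N) *\<^sub>R (\<Sum>i<N. g i q \<omega>) = Gb \<omega> + eb \<omega>"
      by (simp add: Gb_def eb_def e_def sum_subtractf scaleR_diff_right)
    have "(P \<omega> ** transpose (P \<omega>)) *v ((1 / real N) *\<^sub>R (\<Sum>i<N. g i q \<omega>)) = Y \<omega> + Pi \<omega> *v eb \<omega>"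
      unfolding gs by (simp add: Y_def Pi_def matrix_vector_right_distrib)
    then have "(norm ((P \<omega> ** transpose (P \<omega>)) *v ((1 / real N) *\<^sub>R (\<Sum>i<N. g i q \<omega>))))\<^sup>2
        = (norm (Y \<omega>))\<^sup>2 + 2 * (Y \<omega> \<bullet> (Pi \<omega> *v eb \<omega>)) + (norm (Pi \<omega> *v eb \<omega>))\<^sup>2"
      by (simp add: norm_add_sq_eq)
    also have "Y \<omega> \<bullet> (Pi \<omega> *v eb \<omega>) = Y \<omega> \<bullet> eb \<omega>"
      unfolding Y_def Pi_def by (rule stiefel_proj_inner[OF PPw])
    also have "(norm (Pi \<omega> *v eb \<omega>))\<^sup>2 \<le> (norm (eb \<omega>))\<^sup>2"
      unfolding Pi_def by (intro power_mono stiefel_proj_le[OF PPw]) simp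
    also have "(norm (Y \<omega>))\<^sup>2 \<le> 2 * (norm (transpose (P \<omega>) *v v0))\<^sup>2 + 2 * L\<^sup>2 * ((1 / real N) * (\<Sum>i<N. D i \<omega>))"
    proof -
      have "Y \<omega> = Pi \<omega> *v v0 + Pi \<omega> *v (Gb \<omega> - v0)"
        by (simp add: Y_def matrix_vector_right_distrib[symmetric])
      then have a: "(norm (Y \<omega>))\<^sup>2 \<le> 2 * (norm (Pi \<omega> *v v0))\<^sup>2 + 2 * (norm (Pi \<omega> *v (Gb \<omega> - v0)))\<^sup>2"
        using norm_add_sq_le by metis
      have a2: "norm (Pi \<omega> *v v0) = norm (transpose (P \<omega>) *v v0)"
        unfolding Pi_def by (rule stiefel_proj_norm[OF PPw])
      have b: "(norm (Pi \<omega> *v (Gb \<omega> - v0)))\<^sup>2 \<le> (norm (Gb \<omega> - v0))\<^sup>2"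
        unfolding Pi_def by (intro power_mono stiefel_proj_le[OF PPw]) simp
      have "Gb \<omega> - v0 = (1 / real N) *\<^sub>R (\<Sum>i<N. G i \<omega> - gradF i th0)"
        by (simp add: Gb_def v0_def grad_avg sum_subtractf scaleR_diff_right)
      then have c: "(norm (Gb \<omega> - v0))\<^sup>2 \<le> (1 / real N) * (\<Sum>i<N. (norm (G i \<omega> - gradF i th0))\<^sup>2)"
        using norm_avg_sq[OF N_pos] by metis
      have d: "(\<Sum>i<N. (norm (G i \<omega> - gradF i th0))\<^sup>2) \<le> L\<^sup>2 * (\<Sum>i<N. D i \<omega>)"
        unfolding sum_distrib_left
      proof (rule sum_mono)
        fix i assume "i \<in> {..<N}"
        then have i: "i < N" by simp
        have "(norm (G i \<omega> - gradF i th0))\<^sup>2 \<le> (L * norm (th i q \<omega> - th0))\<^sup>2"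
          unfolding G_def by (rule power_mono[OF F_smooth[OF i]]) simp
        then show "(norm (G i \<omega> - gradF i th0))\<^sup>2 \<le> L\<^sup>2 * D i \<omega>"
          by (simp add: D_def power_mult_distrib)
      qed
      have d2: "(1 / real N) * (\<Sum>i<N. (norm (G i \<omega> - gradF i th0))\<^sup>2) \<le> (1 / real N) * (L\<^sup>2 * (\<Sum>i<N. D i \<omega>))"
        by (rule mult_left_mono[OF d]) simp
      have d3: "(1 / real N) * (L\<^sup>2 * (\<Sum>i<N. D i \<omega>)) = L\<^sup>2 * ((1 / real N) * (\<Sum>i<N. D i \<omega>))" by simp
      have e: "2 * L\<^sup>2 * ((1 / real N) * (\<Sum>i<N. D i \<omega>)) = 2 * (L\<^sup>2 * ((1 / real N) * (\<Sum>i<N. D i \<omega>)))" by simp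
      show ?thesis unfolding e using a[unfolded a2] b c d2[unfolded d3] by linarith
    qed
    finally show ?thesis unfolding R_def by simp
  qed
  have iYeb: "integrable M (\<lambda>\<omega>. Y \<omega> \<bullet> eb \<omega>)"
  proof -
    have "integrable M (\<lambda>\<omega>. (1 / real N) * (\<Sum>i<N. \<Sum>k\<in>UNIV. Y \<omega> $ k * e i \<omega> $ k))"
      by (intro Bochner_Integration.integrable_mult_right Bochner_Integration.integrable_sum iYe) auto
    moreover have "Y \<omega> \<bullet> eb \<omega> = (1 / real N) * (\<Sum>i<N. \<Sum>k\<in>UNIV. Y \<omega> $ k * e i \<omega> $ k)" for \<omega>
    proof -
      have "Y \<omega> \<bullet> eb \<omega> = (1 / real N) * (\<Sum>i<N. Y \<omega> \<bullet> e i \<omega>)"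
        by (simp add: eb_def inner_sum_right)
      then show ?thesis by (simp add: inner_vec_real)
    qed
    ultimately show ?thesis by simp
  qed
  have iR: "integrable M R"
    unfolding R_def[abs_def]
    by (intro Bochner_Integration.integrable_add Bochner_Integration.integrable_mult_right
        Bochner_Integration.integrable_sum hv1 iD iYeb ieb) auto
  have intR: "(\<integral>\<omega>. R \<omega> \<partial>M) = 2 * (real CARD('r) / real CARD('d) * (norm v0)\<^sup>2)
      + 2 * L\<^sup>2 * ((1 / real N) * (\<Sum>i<N. \<integral>\<omega>. D i \<omega> \<partial>M)) + 2 * 0 + (\<integral>\<omega>. (norm (eb \<omega>))\<^sup>2 \<partial>M)"
  proof -
    have iS: "integrable M (\<lambda>\<omega>. \<Sum>i<N. D i \<omega>)" by (intro Bochner_Integration.integrable_sum iD) auto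
    have "(\<integral>\<omega>. R \<omega> \<partial>M) = 2 * (\<integral>\<omega>. (norm (transpose (P \<omega>) *v v0))\<^sup>2 \<partial>M)
      + 2 * L\<^sup>2 * ((1 / real N) * (\<integral>\<omega>. (\<Sum>i<N. D i \<omega>) \<partial>M)) + 2 * (\<integral>\<omega>. Y \<omega> \<bullet> eb \<omega> \<partial>M) + (\<integral>\<omega>. (norm (eb \<omega>))\<^sup>2 \<partial>M)"
      unfolding R_def using hv1 iS iYeb ieb by simp
    also have "(\<integral>\<omega>. (\<Sum>i<N. D i \<omega>) \<partial>M) = (\<Sum>i<N. \<integral>\<omega>. D i \<omega> \<partial>M)"
      by (rule Bochner_Integration.integral_sum) (auto intro: iD)
    finally show ?thesis using hv2 c1 by simp
  qed
  have "(\<integral>\<^sup>+\<omega>. ennreal ((norm ((P \<omega> ** transpose (P \<omega>)) *v ((1 / real N) *\<^sub>R (\<Sum>i<N. g i q \<omega>))))\<^sup>2) \<partial>M)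
      \<le> (\<integral>\<^sup>+\<omega>. ennreal (R \<omega>) \<partial>M)"
    by (intro nn_integral_mono ennreal_leI pw)
  also have "\<dots> = ennreal (\<integral>\<omega>. R \<omega> \<partial>M)"
  proof (rule nn_integral_eq_integral[OF iR])
    show "AE \<omega> in M. 0 \<le> R \<omega>"
      by (intro AE_I2 order_trans[OF _ pw]) auto
  qed
  also have "\<dots> \<le> ennreal (2 * (real CARD('r) / real CARD('d)) * (norm (gradf th0))\<^sup>2 + \<sigma>L\<^sup>2 / real N
        + 2 * L\<^sup>2 * ((1 / real N) * (\<Sum>i<N. \<integral>\<omega>. (norm (th i q \<omega> - th0))\<^sup>2 \<partial>M)))"
  proof (intro ennreal_leI)
    have De: "D i = (\<lambda>\<omega>. (norm (th i q \<omega> - th0))\<^sup>2)" for i by (rule ext) (simp add: D_def)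
    show "(\<integral>\<omega>. R \<omega> \<partial>M) \<le> 2 * (real CARD('r) / real CARD('d)) * (norm (gradf th0))\<^sup>2 + \<sigma>L\<^sup>2 / real N
        + 2 * L\<^sup>2 * ((1 / real N) * (\<Sum>i<N. \<integral>\<omega>. (norm (th i q \<omega> - th0))\<^sup>2 \<partial>M))"
      unfolding intR De v0_def using c2 by simp
  qed
  finally show ?thesis .
qed

end

lemma mom_alpha_nonneg: "0 \<le> \<mu> \<Longrightarrow> \<mu> < 1 \<Longrightarrow> 0 \<le> mom_alpha \<mu> t q"
  unfolding mom_alpha_def by (intro divide_nonneg_pos) (auto simp: power_le_one)

lemma mom_alpha_le: "0 \<le> \<mu> \<Longrightarrow> \<mu> < 1 \<Longrightarrow> mom_alpha \<mu> t q \<le> 1 / (1 - \<mu>)"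
  unfolding mom_alpha_def by (intro divide_right_mono) auto

lemma mom_S_pos:
  assumes "0 \<le> \<mu>" "\<mu> < 1" "t > 0"
  shows "0 < mom_S \<mu> t"
proof -
  have "mom_alpha \<mu> t (t - 1) = 1" using assms unfolding mom_alpha_def by simp
  moreover have "mom_alpha \<mu> t (t - 1) \<le> mom_S \<mu> t"
    unfolding mom_S_def using assms
    by (intro member_le_sum mom_alpha_nonneg) auto
  ultimately show ?thesis by simp
qed

context fed
begin

lemma delta_form:
  "(1 / real N) *\<^sub>R (\<Sum>i<N. th i \<tau> \<omega> - th0)
    = - (\<eta> *\<^sub>R (\<Sum>q<\<tau>. mom_alpha \<mu> \<tau> q *\<^sub>R ((P \<omega> ** transpose (P \<omega>)) *v ((1 / real N) *\<^sub>R (\<Sum>i<N. g i q \<omega>)))))"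
proof -
  let ?Pi = "P \<omega> ** transpose (P \<omega>)"
  have "(\<Sum>i<N. th i \<tau> \<omega> - th0) = (\<Sum>i<N. - (\<eta> *\<^sub>R (\<Sum>q<\<tau>. mom_alpha \<mu> \<tau> q *\<^sub>R (?Pi *v g i q \<omega>))))"
    by (simp add: th_closed)
  also have "\<dots> = - (\<eta> *\<^sub>R (\<Sum>q<\<tau>. mom_alpha \<mu> \<tau> q *\<^sub>R (?Pi *v (\<Sum>i<N. g i q \<omega>))))"
    by (simp add: sum_negf scaleR_sum_right vec.sum sum.swap[of _ "{..<N}"])
  finally have X: "(\<Sum>i<N. th i \<tau> \<omega> - th0) = - (\<eta> *\<^sub>R (\<Sum>q<\<tau>. mom_alpha \<mu> \<tau> q *\<^sub>R (?Pi *v (\<Sum>i<N. g i q \<omega>))))" .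
  have "(\<Sum>q<\<tau>. mom_alpha \<mu> \<tau> q *\<^sub>R (?Pi *v ((1 / real N) *\<^sub>R (\<Sum>i<N. g i q \<omega>))))
      = (1 / real N) *\<^sub>R (\<Sum>q<\<tau>. mom_alpha \<mu> \<tau> q *\<^sub>R (?Pi *v (\<Sum>i<N. g i q \<omega>)))"
  proof -
    have "(\<Sum>q<\<tau>. mom_alpha \<mu> \<tau> q *\<^sub>R (?Pi *v ((1 / real N) *\<^sub>R (\<Sum>i<N. g i q \<omega>))))
       = (\<Sum>q<\<tau>. (1 / real N) *\<^sub>R (mom_alpha \<mu> \<tau> q *\<^sub>R (?Pi *v (\<Sum>i<N. g i q \<omega>))))"
      by (rule sum.cong) (simp_all only: mv_scaleR scaleR_scaleR mult.commute)
    also have "\<dots> = (1 / real N) *\<^sub>R (\<Sum>q<\<tau>. mom_alpha \<mu> \<tau> q *\<^sub>R (?Pi *v (\<Sum>i<N. g i q \<omega>)))"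
      by (rule scaleR_sum_right[symmetric])
    finally show ?thesis .
  qed
  then show ?thesis unfolding X by (simp add: scaleR_scaleR mult.commute)
qed

lemma main_fed:
  assumes eta: "\<eta> > 0" and tau: "\<tau> > 0"
  shows "(\<integral>\<^sup>+\<omega>. ennreal ((norm ((1 / real N) *\<^sub>R (\<Sum>i<N. th i \<tau> \<omega> - th0)))\<^sup>2) \<partial>M)
         \<le> ennreal (2 * \<eta>\<^sup>2 * mom_S \<mu> \<tau> *
                (real CARD('r) / real CARD('d) * mom_S \<mu> \<tau> * (norm (gradf th0))\<^sup>2
                 + mom_S \<mu> \<tau> * \<sigma>L\<^sup>2 / real N))
           + ennreal (2 * \<eta>\<^sup>2 * mom_S \<mu> \<tau> * (L\<^sup>2 / (1 - \<mu>)))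
             * (ennreal (1 / real N) *
                (\<Sum>i<N. \<Sum>s<\<tau>. \<integral>\<^sup>+\<omega>. ennreal ((norm (th i s \<omega> - th0))\<^sup>2) \<partial>M))"
proof (cases "\<exists>i<N. \<exists>s<\<tau>. (\<integral>\<^sup>+\<omega>. ennreal ((norm (th i s \<omega> - th0))\<^sup>2) \<partial>M) = \<top>")
  case True
  have Spos: "0 < mom_S \<mu> \<tau>" by (rule mom_S_pos[OF mu0 mu1 tau])
  have "(\<Sum>i<N. \<Sum>s<\<tau>. \<integral>\<^sup>+\<omega>. ennreal ((norm (th i s \<omega> - th0))\<^sup>2) \<partial>M) = \<top>"
    using True by (auto simp: ennreal_sum_eq_top)
  moreover have "ennreal (1 / real N) \<noteq> 0" using N_pos by simp
  moreover have "ennreal (2 * \<eta>\<^sup>2 * mom_S \<mu> \<tau> * (L\<^sup>2 / (1 - \<mu>))) \<noteq> 0"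
    using eta Spos Lpos mu1 by (simp add: ennreal_eq_0_iff not_le)
  ultimately have "ennreal (2 * \<eta>\<^sup>2 * mom_S \<mu> \<tau> * (L\<^sup>2 / (1 - \<mu>)))
             * (ennreal (1 / real N) *
                (\<Sum>i<N. \<Sum>s<\<tau>. \<integral>\<^sup>+\<omega>. ennreal ((norm (th i s \<omega> - th0))\<^sup>2) \<partial>M)) = \<top>"
    by (simp add: ennreal_mult_eq_top_iff)
  then show ?thesis by simp
next
  case False
  define S where "S = mom_S \<mu> \<tau>"
  define \<alpha> where "\<alpha> q = mom_alpha \<mu> \<tau> q" for q
  define \<rho> where "\<rho> = real CARD('r) / real CARD('d)"
  define G2 where "G2 = (norm (gradf th0))\<^sup>2"
  define W where "W q \<omega> = (norm ((P \<omega> ** transpose (P \<omega>)) *v ((1 / real N) *\<^sub>R (\<Sum>i<N. g i q \<omega>))))\<^sup>2" for q \<omega>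
  define e where "e i s = (\<integral>\<omega>. (norm (th i s \<omega> - th0))\<^sup>2 \<partial>M)" for i s
  define B where "B q = 2 * \<rho> * G2 + \<sigma>L\<^sup>2 / real N + 2 * L\<^sup>2 * ((1 / real N) * (\<Sum>i<N. e i q))" for q
  have \<alpha>0: "0 \<le> \<alpha> q" for q unfolding \<alpha>_def by (rule mom_alpha_nonneg[OF mu0 mu1])
  have \<alpha>1: "\<alpha> q \<le> 1 / (1 - \<mu>)" for q unfolding \<alpha>_def by (rule mom_alpha_le[OF mu0 mu1])
  have S\<alpha>: "S = (\<Sum>q<\<tau>. \<alpha> q)" unfolding S_def \<alpha>_def mom_S_def by simp
  have S0: "0 \<le> S" unfolding S\<alpha> by (intro sum_nonneg \<alpha>0)
  have fin: "(\<integral>\<^sup>+\<omega>. ennreal ((norm (th i s \<omega> - th0))\<^sup>2) \<partial>M) < \<top>" if "i < N" "s < \<tau>" for i s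
    using False that by (auto simp: less_top)
  have mth: "i < N \<Longrightarrow> s < \<tau> \<Longrightarrow> (\<lambda>\<omega>. (norm (th i s \<omega> - th0))\<^sup>2) \<in> borel_measurable M" for i s
  proof -
    assume "i < N" "s < \<tau>"
    then have [measurable]: "th i s \<in> borel_measurable M" by (intro th_meas) auto
    show ?thesis by measurable
  qed
  have iD: "integrable M (\<lambda>\<omega>. (norm (th i s \<omega> - th0))\<^sup>2)" if i: "i < N" and s: "s < \<tau>" for i s
    by (rule integrableI_bounded[OF mth[OF i s]]) (use fin[OF i s] in simp)
  have nnE: "(\<integral>\<^sup>+\<omega>. ennreal ((norm (th i s \<omega> - th0))\<^sup>2) \<partial>M) = ennreal (e i s)" if i: "i < N" and s: "s < \<tau>" for i s
    unfolding e_def by (rule nn_integral_eq_integral[OF iD[OF i s]]) auto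
  have e0: "0 \<le> e i s" for i s unfolding e_def by (rule Bochner_Integration.integral_nonneg) auto
  have B0: "0 \<le> B q" for q
    unfolding B_def \<rho>_def G2_def by (intro add_nonneg_nonneg mult_nonneg_nonneg sum_nonneg e0) auto
  have mW: "q < \<tau> \<Longrightarrow> W q \<in> borel_measurable M" for q
  proof -
    assume q: "q < \<tau>"
    have [measurable]: "(\<lambda>\<omega>. (1 / real N) *\<^sub>R (\<Sum>i<N. g i q \<omega>)) \<in> borel_measurable M"
      by (intro borel_measurable_scaleR borel_measurable_const borel_measurable_sum g_meas) (use q in auto)
    have "W q = (\<lambda>\<omega>. (norm ((P \<omega> ** transpose (P \<omega>)) *v ((1 / real N) *\<^sub>R (\<Sum>i<N. g i q \<omega>))))\<^sup>2)"
      by (rule ext) (simp add: W_def)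
    also have "\<dots> \<in> borel_measurable M" by measurable
    finally show ?thesis .
  qed
  have stq: "(\<integral>\<^sup>+\<omega>. ennreal (W q \<omega>) \<partial>M) \<le> ennreal (B q)" if q: "q < \<tau>" for q
    unfolding W_def B_def e_def \<rho>_def G2_def
    by (rule step_q[OF q iD[OF _ q]])
  have iW: "integrable M (W q)" if q: "q < \<tau>" for q
  proof (rule integrableI_bounded[OF mW[OF q]])
    have "(\<integral>\<^sup>+\<omega>. ennreal (norm (W q \<omega>)) \<partial>M) = (\<integral>\<^sup>+\<omega>. ennreal (W q \<omega>) \<partial>M)"
      by (simp add: W_def)
    then show "(\<integral>\<^sup>+\<omega>. ennreal (norm (W q \<omega>)) \<partial>M) < \<infinity>"
      using stq[OF q] by (simp add: le_less_trans)
  qed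
  have intW: "(\<integral>\<omega>. W q \<omega> \<partial>M) \<le> B q" if q: "q < \<tau>" for q
  proof -
    have "ennreal (\<integral>\<omega>. W q \<omega> \<partial>M) = (\<integral>\<^sup>+\<omega>. ennreal (W q \<omega>) \<partial>M)"
      by (rule nn_integral_eq_integral[symmetric, OF iW[OF q]]) (simp add: W_def)
    also have "\<dots> \<le> ennreal (B q)" by (rule stq[OF q])
    finally show ?thesis using B0[of q] by (simp add: ennreal_le_iff)
  qed
  define H where "H \<omega> = \<eta>\<^sup>2 * S * (\<Sum>q<\<tau>. \<alpha> q * W q \<omega>)" for \<omega>
  have pw: "(norm ((1 / real N) *\<^sub>R (\<Sum>i<N. th i \<tau> \<omega> - th0)))\<^sup>2 \<le> H \<omega>" for \<omega>
  proof -
    let ?x = "\<lambda>q. (P \<omega> ** transpose (P \<omega>)) *v ((1 / real N) *\<^sub>R (\<Sum>i<N. g i q \<omega>))"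
    have "(norm ((1 / real N) *\<^sub>R (\<Sum>i<N. th i \<tau> \<omega> - th0)))\<^sup>2 = \<eta>\<^sup>2 * (norm (\<Sum>q<\<tau>. \<alpha> q *\<^sub>R ?x q))\<^sup>2"
      unfolding delta_form \<alpha>_def using eta by (simp add: power_mult_distrib)
    also have "\<dots> \<le> \<eta>\<^sup>2 * ((\<Sum>q<\<tau>. \<alpha> q) * (\<Sum>q<\<tau>. \<alpha> q * (norm (?x q))\<^sup>2))"
      by (intro mult_left_mono norm_sum_weighted_sq \<alpha>0) auto
    finally show ?thesis unfolding H_def W_def S\<alpha> by (simp add: mult.assoc)
  qed
  have iH: "integrable M H"
    unfolding H_def[abs_def]
    by (intro Bochner_Integration.integrable_mult_right Bochner_Integration.integrable_sum iW) auto
  have intH: "(\<integral>\<omega>. H \<omega> \<partial>M) = \<eta>\<^sup>2 * S * (\<Sum>q<\<tau>. \<alpha> q * (\<integral>\<omega>. W q \<omega> \<partial>M))"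
  proof -
    have "(\<integral>\<omega>. (\<Sum>q<\<tau>. \<alpha> q * W q \<omega>) \<partial>M) = (\<Sum>q<\<tau>. (\<integral>\<omega>. \<alpha> q * W q \<omega> \<partial>M))"
      by (rule Bochner_Integration.integral_sum) (auto intro: iW)
    then show ?thesis unfolding H_def by simp
  qed
  define X where "X = (\<Sum>q<\<tau>. \<alpha> q * (\<Sum>i<N. e i q))"
  define Y where "Y = (\<Sum>i<N. \<Sum>s<\<tau>. e i s)"
  define c where "c = \<eta>\<^sup>2 * S"
  have c0: "0 \<le> c" unfolding c_def using S0 by simp
  have XY: "X \<le> Y / (1 - \<mu>)"
  proof -
    have "X \<le> (\<Sum>q<\<tau>. (1 / (1 - \<mu>)) * (\<Sum>i<N. e i q))"
      unfolding X_def by (intro sum_mono mult_right_mono \<alpha>1 sum_nonneg e0)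
    also have "\<dots> = (1 / (1 - \<mu>)) * (\<Sum>q<\<tau>. \<Sum>i<N. e i q)" by (simp add: sum_distrib_left)
    also have "(\<Sum>q<\<tau>. \<Sum>i<N. e i q) = Y" unfolding Y_def by (rule sum.swap)
    finally show ?thesis by simp
  qed
  have Y0: "0 \<le> Y" unfolding Y_def by (intro sum_nonneg e0)
  have sumB: "(\<Sum>q<\<tau>. \<alpha> q * B q) = S * (2 * \<rho> * G2 + \<sigma>L\<^sup>2 / real N) + 2 * L\<^sup>2 * ((1 / real N) * X)"
    unfolding B_def X_def S\<alpha>
    by (simp add: sum.distrib sum_distrib_left sum_distrib_right sum_divide_distrib algebra_simps)
  have real_ineq: "\<eta>\<^sup>2 * S * (\<Sum>q<\<tau>. \<alpha> q * (\<integral>\<omega>. W q \<omega> \<partial>M))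
      \<le> 2 * \<eta>\<^sup>2 * S * (\<rho> * S * G2 + S * \<sigma>L\<^sup>2 / real N) + 2 * \<eta>\<^sup>2 * S * (L\<^sup>2 / (1 - \<mu>)) * ((1 / real N) * Y)"
  proof -
    have "\<eta>\<^sup>2 * S * (\<Sum>q<\<tau>. \<alpha> q * (\<integral>\<omega>. W q \<omega> \<partial>M)) \<le> c * (\<Sum>q<\<tau>. \<alpha> q * B q)"
      unfolding c_def by (intro mult_left_mono sum_mono mult_left_mono intW \<alpha>0) (auto simp: S0)
    also have "\<dots> = c * (S * (2 * \<rho> * G2 + \<sigma>L\<^sup>2 / real N)) + c * (2 * L\<^sup>2 * ((1 / real N) * X))"
      unfolding sumB by (simp add: distrib_left)
    also have "c * (2 * L\<^sup>2 * ((1 / real N) * X)) \<le> c * (2 * L\<^sup>2 * ((1 / real N) * (Y / (1 - \<mu>))))"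
      by (intro mult_left_mono c0 XY) auto
    also have "c * (S * (2 * \<rho> * G2 + \<sigma>L\<^sup>2 / real N)) \<le> c * (S * (2 * \<rho> * G2 + 2 * (\<sigma>L\<^sup>2 / real N)))"
      by (intro mult_left_mono c0 S0) (auto simp: divide_right_mono)
    also have "c * (S * (2 * \<rho> * G2 + 2 * (\<sigma>L\<^sup>2 / real N))) + c * (2 * L\<^sup>2 * ((1 / real N) * (Y / (1 - \<mu>))))
        = 2 * \<eta>\<^sup>2 * S * (\<rho> * S * G2 + S * \<sigma>L\<^sup>2 / real N) + 2 * \<eta>\<^sup>2 * S * (L\<^sup>2 / (1 - \<mu>)) * ((1 / real N) * Y)"
      unfolding c_def by (simp add: algebra_simps)
    finally show ?thesis by simp
  qed
  have "(\<integral>\<^sup>+\<omega>. ennreal ((norm ((1 / real N) *\<^sub>R (\<Sum>i<N. th i \<tau> \<omega> - th0)))\<^sup>2) \<partial>M)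
      \<le> (\<integral>\<^sup>+\<omega>. ennreal (H \<omega>) \<partial>M)"
    by (intro nn_integral_mono ennreal_leI pw)
  also have "\<dots> = ennreal (\<integral>\<omega>. H \<omega> \<partial>M)"
    by (rule nn_integral_eq_integral[OF iH]) (intro AE_I2 order_trans[OF _ pw], simp)
  also have "\<dots> \<le> ennreal (2 * \<eta>\<^sup>2 * S * (\<rho> * S * G2 + S * \<sigma>L\<^sup>2 / real N) + 2 * \<eta>\<^sup>2 * S * (L\<^sup>2 / (1 - \<mu>)) * ((1 / real N) * Y))"
    unfolding intH by (rule ennreal_leI[OF real_ineq])
  also have "\<dots> = ennreal (2 * \<eta>\<^sup>2 * mom_S \<mu> \<tau> *
                (real CARD('r) / real CARD('d) * mom_S \<mu> \<tau> * (norm (gradf th0))\<^sup>2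
                 + mom_S \<mu> \<tau> * \<sigma>L\<^sup>2 / real N))
           + ennreal (2 * \<eta>\<^sup>2 * mom_S \<mu> \<tau> * (L\<^sup>2 / (1 - \<mu>)))
             * (ennreal (1 / real N) *
                (\<Sum>i<N. \<Sum>s<\<tau>. \<integral>\<^sup>+\<omega>. ennreal ((norm (th i s \<omega> - th0))\<^sup>2) \<partial>M))"
  proof -
    have "(\<Sum>i<N. \<Sum>s<\<tau>. \<integral>\<^sup>+\<omega>. ennreal ((norm (th i s \<omega> - th0))\<^sup>2) \<partial>M) = (\<Sum>i<N. \<Sum>s<\<tau>. ennreal (e i s))"
      by (intro sum.cong refl) (auto simp: nnE)
    also have "\<dots> = ennreal Y"
      unfolding Y_def by (simp add: sum_ennreal e0 sum_nonneg)
    finally have sY: "(\<Sum>i<N. \<Sum>s<\<tau>. \<integral>\<^sup>+\<omega>. ennreal ((norm (th i s \<omega> - th0))\<^sup>2) \<partial>M) = ennreal Y" .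
    have p1: "0 \<le> 2 * \<eta>\<^sup>2 * S * (\<rho> * S * G2 + S * \<sigma>L\<^sup>2 / real N)"
      unfolding \<rho>_def G2_def using S0 by (intro mult_nonneg_nonneg add_nonneg_nonneg) auto
    have p2: "0 \<le> 2 * \<eta>\<^sup>2 * S * (L\<^sup>2 / (1 - \<mu>))" using S0 mu1 by simp
    have p3: "0 \<le> (1 / real N) * Y" using Y0 by simp
    have q1: "ennreal (1 / real N) * ennreal Y = ennreal (1 / real N * Y)"
      by (rule ennreal_mult[symmetric]) (auto simp: Y0)
    have q2: "ennreal (2 * \<eta>\<^sup>2 * S * (L\<^sup>2 / (1 - \<mu>))) * ennreal (1 / real N * Y)
        = ennreal (2 * \<eta>\<^sup>2 * S * (L\<^sup>2 / (1 - \<mu>)) * (1 / real N * Y))"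
      by (rule ennreal_mult[symmetric, OF p2 p3])
    have q3: "ennreal (2 * \<eta>\<^sup>2 * S * (\<rho> * S * G2 + S * \<sigma>L\<^sup>2 / real N))
         + ennreal (2 * \<eta>\<^sup>2 * S * (L\<^sup>2 / (1 - \<mu>)) * (1 / real N * Y))
       = ennreal (2 * \<eta>\<^sup>2 * S * (\<rho> * S * G2 + S * \<sigma>L\<^sup>2 / real N)
         + 2 * \<eta>\<^sup>2 * S * (L\<^sup>2 / (1 - \<mu>)) * (1 / real N * Y))"
      by (rule ennreal_plus[symmetric, OF p1 mult_nonneg_nonneg[OF p2 p3]])
    show ?thesis
      unfolding sY S_def[symmetric] \<rho>_def[symmetric] G2_def[symmetric] q1 q2 q3 ..
  qed
  finally show ?thesis .
qed

end

theorem mainTheorem8: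
  fixes M :: "'a measure"
    and P :: "'a \<Rightarrow> real^'r^'d"
    and g :: "nat \<Rightarrow> nat \<Rightarrow> 'a \<Rightarrow> real^'d"
    and F :: "nat \<Rightarrow> real^'d \<Rightarrow> real"
    and gradF :: "nat \<Rightarrow> real^'d \<Rightarrow> real^'d"
    and f :: "real^'d \<Rightarrow> real"
    and gradf :: "real^'d \<Rightarrow> real^'d"
    and th0 :: "real^'d"
    and N \<tau> :: nat and \<mu> \<eta> L \<sigma>L \<sigma>G :: real
  assumes N_pos: "N > 0" and tau_pos: "\<tau> > 0"
    and r_le_d: "CARD('r) \<le> CARD('d)"
    and mu: "0 \<le> \<mu>" "\<mu> < 1" and eta: "\<eta> > 0" and L: "L > 0"
    \<comment> \<open>f is the average of the F i, all differentiable\<close>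
    and f_def: "\<And>x. f x = (1 / real N) * (\<Sum>i<N. F i x)"
    and F_grad: "\<And>i x. i < N \<Longrightarrow> (F i has_derivative (\<lambda>h. gradF i x \<bullet> h)) (at x)"
    and f_grad: "\<And>x. (f has_derivative (\<lambda>h. gradf x \<bullet> h)) (at x)"
    \<comment> \<open>Assumption A1\<close>
    and f_bdd: "\<exists>fstar. \<forall>x. fstar \<le> f x"
    and f_smooth: "\<And>x y. norm (gradf x - gradf y) \<le> L * norm (x - y)"
    and F_smooth: "\<And>i x y. i < N \<Longrightarrow> norm (gradF i x - gradF i y) \<le> L * norm (x - y)"
    \<comment> \<open>Assumption A2 (heterogeneity)\<close>
    and hetero: "\<And>i x. i < N \<Longrightarrow> (norm (gradF i x - gradf x))\<^sup>2 \<le> \<sigma>G\<^sup>2"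
    \<comment> \<open>the round's probability space, Haar projection\<close>
    and prob: "prob_space M"
    and haar: "haar_stiefel M P"
    \<comment> \<open>Assumption A2 (stochastic gradients)\<close>
    and g_meas: "\<And>i s. i < N \<Longrightarrow> s < \<tau> \<Longrightarrow> g i s \<in> borel_measurable M"
    and g_int: "\<And>i s k. i < N \<Longrightarrow> s < \<tau> \<Longrightarrow> integrable M (\<lambda>\<omega>. g i s \<omega> $ k)"
    and unbiased: "\<And>i s k. i < N \<Longrightarrow> s < \<tau> \<Longrightarrow>
        AE \<omega> in M. real_cond_exp M (past_sa M N P g s) (\<lambda>\<omega>. g i s \<omega> $ k) \<omega>
                    = gradF i (client_theta \<eta> \<mu> th0 P g i s \<omega>) $ k"
    and variance: "\<And>i s. i < N \<Longrightarrow> s < \<tau> \<Longrightarrow>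
        AE \<omega> in M. nn_cond_exp M (past_sa M N P g s)
            (\<lambda>\<omega>. ennreal ((norm (g i s \<omega> - gradF i (client_theta \<eta> \<mu> th0 P g i s \<omega>)))\<^sup>2)) \<omega>
          \<le> ennreal (\<sigma>L\<^sup>2)"
    and cond_indep: "\<And>s (h :: nat \<Rightarrow> real^'d \<Rightarrow> real) B. s < \<tau> \<Longrightarrow>
        (\<And>i. h i \<in> borel_measurable borel) \<Longrightarrow> (\<And>i x. \<bar>h i x\<bar> \<le> B) \<Longrightarrow>
        AE \<omega> in M. real_cond_exp M (past_sa M N P g s) (\<lambda>\<omega>. \<Prod>i<N. h i (g i s \<omega>)) \<omega>
                    = (\<Prod>i<N. real_cond_exp M (past_sa M N P g s) (\<lambda>\<omega>. h i (g i s \<omega>)) \<omega>)"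
  shows "(\<integral>\<^sup>+\<omega>. ennreal ((norm ((1 / real N) *\<^sub>R
              (\<Sum>i<N. client_theta \<eta> \<mu> th0 P g i \<tau> \<omega> - th0)))\<^sup>2) \<partial>M)
         \<le> ennreal (2 * \<eta>\<^sup>2 * mom_S \<mu> \<tau> *
                (real CARD('r) / real CARD('d) * mom_S \<mu> \<tau> * (norm (gradf th0))\<^sup>2
                 + mom_S \<mu> \<tau> * \<sigma>L\<^sup>2 / real N))
           + ennreal (2 * \<eta>\<^sup>2 * mom_S \<mu> \<tau> * (L\<^sup>2 / (1 - \<mu>)))
             * (ennreal (1 / real N) *
                (\<Sum>i<N. \<Sum>s<\<tau>. \<integral>\<^sup>+\<omega>. ennreal ((norm (client_theta \<eta> \<mu> th0 P g i s \<omega> - th0))\<^sup>2) \<partial>M))"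
proof -
  have grad_avg: "gradf x = (1 / real N) *\<^sub>R (\<Sum>i<N. gradF i x)" for x
  proof -
    define v where "v = (1 / real N) *\<^sub>R (\<Sum>i<N. gradF i x)"
    have fe: "f = (\<lambda>x. (1 / real N) * (\<Sum>i<N. F i x))" by (rule ext) (rule f_def)
    have d1: "((\<lambda>x. (1 / real N) * (\<Sum>i<N. F i x)) has_derivative (\<lambda>h. (1 / real N) * (\<Sum>i<N. gradF i x \<bullet> h))) (at x)"
      by (intro has_derivative_mult_right has_derivative_sum F_grad) auto
    have "(\<lambda>h. (1 / real N) * (\<Sum>i<N. gradF i x \<bullet> h)) = (\<lambda>h. v \<bullet> h)"
      by (rule ext) (simp add: v_def inner_sum_left)
    with d1 fe have d2: "(f has_derivative (\<lambda>h. v \<bullet> h)) (at x)" by simp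
    have "(\<lambda>h. gradf x \<bullet> h) = (\<lambda>h. v \<bullet> h)"
      by (rule has_derivative_unique[OF f_grad d2])
    then have "gradf x \<bullet> (gradf x - v) = v \<bullet> (gradf x - v)" by metis
    then have "(gradf x - v) \<bullet> (gradf x - v) = 0" by (simp add: inner_diff_left)
    then show ?thesis unfolding v_def[symmetric] by simp
  qed
  interpret fed M P g gradF gradf th0 N \<tau> \<mu> \<eta> L \<sigma>L
    apply (rule fed.intro[OF prob])
    apply (rule fed_axioms.intro)
              apply (rule N_pos)
             apply (rule mu(1))
            apply (rule mu(2))
           apply (rule L)
          apply (rule grad_avg)
         apply (erule F_smooth)
        apply (rule haar)
       apply (erule (1) g_meas)
      apply (erule (1) unbiased)
     apply (erule (1) variance)
    apply (rule cond_indep; assumption)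
    done
  show ?thesis by (rule main_fed[OF eta tau_pos])
qed

end
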